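(* Consider the nonlinear system $\dot{x}=f(x,u)$, $y=h(x,u)$, $x(0)=x^0$, with state $x(t)\in\mathbb{R}^n$, input $u(t)\in U\subset\mathbb{R}^m$, output $y(t)\in\mathbb{R}^p$, and $f,h$ of class $C^2$. Suppose: (i) the system is uniformly observable for any input, i.e. there exist coordinates $\{x_{ij}: i=1,\dots,p,\ j=1,\dots,l_i\}$ with $1\le l_1\le\dots\le l_p$, $\sum_i l_i=n$, in which the system takes the observable form $y_i=x_{i1}+h_i(u)$, $\dot{x}_{ij}=x_{i,j+1}+f_{ij}(\underline{x}_j,u)$ for $j<l_i$, $\dot{x}_{il_i}=f_{il_i}(\underline{x}_{l_i},u)$, where $\underline{x}_j=(x_{11},\dots,x_{1,\min\{j,l_1\}},x_{21},\dots,x_{pj})$ (indices $i=1,\dots,p$, $k=1,\dots,\min\{j,l_i\}$). Equivalently $\dot{x}=\bar{A}x+\bar{f}(x,u)$, $y=\bar{C}x+\bar{h}(u)$, where $\bar{A}$ is block diagonal with $l_i\times l_i$ shift blocks (ones on the superdiagonal, zeros elsewhere), $\bar{C}$ is block diagonal with $1\times l_i$ blocks $[1\ 0\ \cdots\ 0]$, $\bar{f}$ stacks the $f_{ij}$ and $\bar{h}$ stacks the $h_i$. Without loss of generality the system is in this form, and there is $L$ such that for all $x,\xi\in\mathbb{R}^n$, $u\in U$: $|f_{i}(\underline{x}_j,u)-f_{i}(\underline{\xi}_j,u)|\le L|\underline{x}_j-\underline{\xi}_j|$ ($|\cdot|$ the Euclidean norm); (ii) the second derivative of $\bar{f}$ is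 bounded: $\left|\frac{\partial^2\bar{f}}{\partial x_i\partial x_j}(x,u)\xi_i\xi_j\right|\le L|\xi|^2$ for all $x,\xi\in\mathbb{R}^n$, $u\in U$ (summation over repeated indices); (iii) $x(t),y(t)$ are any state and output trajectories generated by $\dot{x}=\bar{A}x+\bar{f}(x,u)$, $y=\bar{C}x+\bar{h}(u)$; (iv) the $n\times n$ design matrix $G$ is invertible, and $\Gamma=GG'$; (v) $\hat{x}(t),P(t)$ solve the extended Kalman filter $\dot{\hat{x}}=f(\hat{x},u)+PC'(y-h(\hat{x},u))$, $\dot{P}=AP+PA'+\Gamma-PC'CP$, $\hat{x}(0)=\hat{x}^0$, $P(0)=P^0$, with $A(t)=\frac{\partial f}{\partial x}(\hat{x}(t),u(t))$, $C(t)=\frac{\partial h}{\partial x}(\hat{x}(t),u(t))$, where $P(0)$ is positive definite and $\tilde{x}(0)=x(0)-\hat{x}(0)$ is sufficiently small. Then $|x(t)-\hat{x}(t)|\to 0$ exponentially as $t\to\infty$.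
   Context: Local convergence of the extended Kalman filter for nonlinear systems that are uniformly observable for any input, $C^2$, Lipschitz in observable form, and with bounded second partial derivatives. *)

theory Defs
  imports "HOL-Analysis.Analysis"
begin

text \<open>Coordinates of the observable form. The state index type 'n is in bijection with
  the pairs (i,j), i an output index, 1 \<le> j \<le> l i, via k \<mapsto> (blk k, pos k).\<close>
definition obs_coords :: "('p::{finite,linorder} \<Rightarrow> nat) \<Rightarrow> ('n::finite \<Rightarrow> 'p) \<Rightarrow> ('n \<Rightarrow> nat) \<Rightarrow> bool" where
  "obs_coords l blk pos \<longleftrightarrow> (\<forall>i. 1 \<le> l i) \<and> mono l \<and>
     bij_betw (\<lambda>k. (blk k, pos k)) UNIV {(i, j). 1 \<le> j \<and> j \<le> l i}"

definition Abar :: "('n::finite \<Rightarrow> 'p) \<Rightarrow> ('n \<Rightarrow> nat) \<Rightarrow> real^'n^'n" where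
  "Abar blk pos = (\<chi> k k'. if blk k = blk k' \<and> pos k' = pos k + 1 then 1 else 0)"

definition Cbar :: "('n::finite \<Rightarrow> 'p::finite) \<Rightarrow> ('n \<Rightarrow> nat) \<Rightarrow> real^'n^'p" where
  "Cbar blk pos = (\<chi> i k. if blk k = i \<and> pos k = 1 then 1 else 0)"

definition sub_dist :: "('n::finite \<Rightarrow> nat) \<Rightarrow> nat \<Rightarrow> real^'n \<Rightarrow> real^'n \<Rightarrow> real" where
  "sub_dist pos j x \<xi> = sqrt (\<Sum>k'\<in>{k'. pos k' \<le> j}. (x $ k' - \<xi> $ k')\<^sup>2)"

definition has_C2_derivs :: "'a::real_normed_vector set \<Rightarrow> ('a \<Rightarrow> 'b::real_normed_vector)
    \<Rightarrow> ('a \<Rightarrow> 'a \<Rightarrow>\<^sub>L 'b) \<Rightarrow> ('a \<Rightarrow> 'a \<Rightarrow>\<^sub>L 'a \<Rightarrow>\<^sub>L 'b) \<Rightarrow> bool" where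
  "has_C2_derivs S g D1 D2 \<longleftrightarrow>
     (\<forall>z\<in>S. (g has_derivative blinfun_apply (D1 z)) (at z within S) \<and>
             (D1 has_derivative blinfun_apply (D2 z)) (at z within S)) \<and> continuous_on S D2"

definition C2_on :: "'a::real_normed_vector set \<Rightarrow> ('a \<Rightarrow> 'b::real_normed_vector) \<Rightarrow> bool" where
  "C2_on S g \<longleftrightarrow> (\<exists>D1 D2. has_C2_derivs S g D1 D2)"

definition pos_def_mat :: "real^'n^'n \<Rightarrow> bool" where
  "pos_def_mat M \<longleftrightarrow> transpose M = M \<and> (\<forall>v. v \<noteq> 0 \<longrightarrow> 0 < v \<bullet> (M *v v))"

end

theory Submission
  imports Defs
begin


lemma norm_vec_sq: "(norm (x::real^'n))^2 = (\<Sum>i\<in>UNIV. (x$i)^2)"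
  by (simp add: norm_vec_def L2_set_def real_sqrt_pow2 sum_nonneg)

lemma norm_mat_sq: "(norm (X::real^'n^'m))^2 = (\<Sum>i\<in>UNIV. (norm (X$i))^2)"
  by (simp add: norm_vec_def L2_set_def real_sqrt_pow2 sum_nonneg)

lemma mv_comp: "(X *v v) $ i = X$i \<bullet> (v::real^'n)"
  by (simp add: matrix_vector_mult_def inner_vec_def mult.commute)

lemma norm_mv: "norm ((X::real^'n^'m) *v v) \<le> norm X * norm v"
proof -
  have "(norm (X *v v))^2 = (\<Sum>i\<in>UNIV. ((X *v v)$i)^2)" by (rule norm_vec_sq)
  also have "\<dots> \<le> (\<Sum>i\<in>UNIV. (norm (X$i))^2 * (norm v)^2)"
  proof (rule sum_mono)
    fix i
    have "\<bar>(X *v v)$i\<bar> \<le> norm (X$i) * norm v" unfolding mv_comp by (rule Cauchy_Schwarz_ineq2)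
    then have "\<bar>(X *v v)$i\<bar>^2 \<le> (norm (X$i) * norm v)^2" by (rule power_mono) simp
    then show "((X *v v)$i)^2 \<le> (norm (X$i))^2 * (norm v)^2" by (simp add: power_mult_distrib)
  qed
  also have "\<dots> = (norm X * norm v)^2" by (simp add: norm_mat_sq sum_distrib_right power_mult_distrib)
  finally show ?thesis by (rule power2_le_imp_le) simp
qed

lemma mm_comp: "(X ** Y) $ i $ j = X$i \<bullet> column j (Y::real^'p^'n)"
  by (simp add: matrix_matrix_mult_def inner_vec_def column_def mult.commute)

lemma norm_columns_sq: "(\<Sum>j\<in>UNIV. (norm (column j (Y::real^'p^'n)))^2) = (norm Y)^2"
  by (simp add: norm_mat_sq norm_vec_sq column_def sum.swap[of _ "UNIV::'p set"])

lemma norm_mm: "norm ((X::real^'n^'m) ** (Y::real^'p^'n)) \<le> norm X * norm Y"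
proof -
  have "(norm (X ** Y))^2 = (\<Sum>i\<in>UNIV. \<Sum>j\<in>UNIV. ((X ** Y)$i$j)^2)"
    by (simp add: norm_mat_sq norm_vec_sq)
  also have "\<dots> \<le> (\<Sum>i\<in>UNIV. \<Sum>j\<in>UNIV. (norm (X$i))^2 * (norm (column j Y))^2)"
  proof (intro sum_mono)
    fix i j
    have "\<bar>(X ** Y)$i$j\<bar> \<le> norm (X$i) * norm (column j Y)" unfolding mm_comp by (rule Cauchy_Schwarz_ineq2)
    then have "\<bar>(X ** Y)$i$j\<bar>^2 \<le> (norm (X$i) * norm (column j Y))^2" by (rule power_mono) simp
    then show "((X ** Y)$i$j)^2 \<le> (norm (X$i))^2 * (norm (column j Y))^2" by (simp add: power_mult_distrib)
  qed
  also have "\<dots> = (norm X * norm Y)^2"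
    by (simp add: norm_mat_sq sum_distrib_right sum_distrib_left[symmetric] norm_columns_sq power_mult_distrib)
  finally show ?thesis by (rule power2_le_imp_le) simp
qed

lemma norm_transpose: "norm (transpose (X::real^'n^'m)) = norm X"
proof -
  have "(norm (transpose X))^2 = (norm X)^2"
    by (simp add: norm_mat_sq norm_vec_sq transpose_def sum.swap[of _ "UNIV::'m set"])
  then show ?thesis by (simp add: power2_eq_iff_nonneg)
qed

lemma quad_bound: "\<bar>v \<bullet> ((X::real^'n^'n) *v v)\<bar> \<le> norm X * (norm v)^2"
proof -
  have "\<bar>v \<bullet> (X *v v)\<bar> \<le> norm v * norm (X *v v)" by (rule Cauchy_Schwarz_ineq2)
  also have "\<dots> \<le> norm v * (norm X * norm v)" by (intro mult_left_mono norm_mv) simp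
  finally show ?thesis by (simp add: power2_eq_square mult_ac)
qed

lemma bb_mv: "bounded_bilinear (\<lambda>(X::real^'n^'m) (v::real^'n). X *v v)"
  apply (rule bounded_bilinear.intro)
      apply (simp_all add: matrix_vector_mult_add_rdistrib matrix_vector_right_distrib
       matrix_vector_mult_scaleR scaleR_matrix_vector_assoc)
  by (metis mult.commute mult_1 norm_mv)

lemma matrix_add_rdistrib': "((B + C) ** A) = (B ** A) + (C ** (A::real^'p^'n))"
  by (simp add: matrix_matrix_mult_def vec_eq_iff distrib_right sum.distrib)

lemma bb_mm: "bounded_bilinear (\<lambda>(X::real^'n^'m) (Y::real^'p^'n). X ** Y)"
  apply (rule bounded_bilinear.intro)
      apply (simp_all add: matrix_add_ldistrib matrix_add_rdistrib' scalar_matrix_assoc matrix_scalar_ac)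
  by (metis mult.commute mult_1 norm_mm)

lemma inner_mv_transpose: "(v::real^'m) \<bullet> ((X::real^'n^'m) *v w) = (transpose X *v v) \<bullet> w"
  by (metis dot_lmul_matrix transpose_matrix_vector)

lemma inner_mv_sym: "transpose X = X \<Longrightarrow> (v::real^'n) \<bullet> ((X::real^'n^'n) *v w) = (X *v v) \<bullet> w"
  by (metis inner_mv_transpose)


lemma psd_null:
  fixes X :: "real^'n^'n"
  assumes sym: "transpose X = X" and psd: "\<forall>w. w \<bullet> (X *v w) \<ge> 0" and q0: "v \<bullet> (X *v v) = 0"
  shows "X *v v = 0"
proof (rule ccontr)
  assume nz: "X *v v \<noteq> 0"
  define z where "z = X *v v"
  define a where "a = z \<bullet> z"
  define k where "k = z \<bullet> (X *v z)"
  have a: "a > 0" using nz by (simp add: a_def z_def)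
  define s where "s = - a / (\<bar>k\<bar> + 1)"
  have "(v + s *\<^sub>R z) \<bullet> (X *v (v + s *\<^sub>R z)) = v \<bullet> (X *v v) + s * (v \<bullet> (X *v z)) + s * (z \<bullet> (X *v v)) + s * s * k"
    by (simp add: k_def matrix_vector_right_distrib matrix_vector_mult_scaleR inner_add_left inner_add_right algebra_simps)
  also have "v \<bullet> (X *v z) = a" using inner_mv_sym[OF sym, of v z] by (simp add: a_def z_def inner_commute)
  also have "z \<bullet> (X *v v) = a" by (simp add: a_def z_def)
  finally have e: "(v + s *\<^sub>R z) \<bullet> (X *v (v + s *\<^sub>R z)) = 2 * s * a + s * s * k" using q0 by simp
  have "s * s * k \<le> s * s * \<bar>k\<bar>" by (simp add: mult_left_mono)
  moreover have "s * s * \<bar>k\<bar> = a*a*\<bar>k\<bar>/((\<bar>k\<bar>+1)*(\<bar>k\<bar>+1))" by (simp add: s_def)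
  moreover have "a*a*\<bar>k\<bar>/((\<bar>k\<bar>+1)*(\<bar>k\<bar>+1)) \<le> a*a/(\<bar>k\<bar>+1)"
    by (simp add: divide_simps a) (smt (verit) a mult_nonneg_nonneg zero_less_mult_iff)
  moreover have "2 * s * a = - 2*a*a/(\<bar>k\<bar>+1)" by (simp add: s_def)
  moreover have "a*a/(\<bar>k\<bar>+1) > 0" using a by simp
  ultimately have "2 * s * a + s * s * k < 0" by linarith
  with e psd show False by (metis not_le)
qed

lemma touching:
  fixes R R' :: "real \<Rightarrow> real^'n^'n"
  assumes der: "\<And>t. t \<ge> 0 \<Longrightarrow> (R has_vector_derivative R' t) (at t within {0..})"
    and sym: "\<And>t. t \<ge> 0 \<Longrightarrow> transpose (R t) = R t"
    and init: "\<And>v. v \<noteq> 0 \<Longrightarrow> v \<bullet> (R 0 *v v) > 0"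
    and cond: "\<And>t v. t \<ge> 0 \<Longrightarrow> v \<noteq> 0 \<Longrightarrow> (\<forall>w. w \<bullet> (R t *v w) \<ge> 0) \<Longrightarrow> R t *v v = 0
                  \<Longrightarrow> v \<bullet> (R' t *v v) > 0"
    and t0: "t0 \<ge> 0"
  shows "w0 \<bullet> (R t0 *v w0) \<ge> 0"
proof (rule ccontr)
  define q where "q t w = w \<bullet> (R t *v w)" for t and w :: "real^'n"
  have qscale: "q t (c *\<^sub>R w) = c*c * q t w" for t c w
    by (simp add: q_def matrix_vector_mult_scaleR)
  have contR: "continuous_on {0..} R"
    using der by (meson atLeast_iff continuous_on_eq_continuous_within has_vector_derivative_continuous)
  have contq: "continuous_on {0..} (\<lambda>t. q t w)" for w
    unfolding q_def by (intro continuous_intros bounded_bilinear.continuous_on[OF bb_mv] contR)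
  assume "\<not> ?thesis"
  then have neg: "q t0 w0 < 0" by (simp add: q_def)
  then have w0nz: "w0 \<noteq> 0" by (auto simp: q_def)
  define Bad where "Bad = {t. 0 \<le> t \<and> t \<le> t0 \<and> (\<exists>w. norm w = 1 \<and> q t w < 0)}"
  have unit: "\<exists>w'. norm w' = 1 \<and> q t w' < 0" if "q t w < 0" for t w
  proof -
    have wnz: "w \<noteq> 0" using that by (auto simp: q_def)
    have "q t ((1/norm w) *\<^sub>R w) = (1/norm w)*(1/norm w) * q t w" by (rule qscale)
    also have "\<dots> < 0" using that wnz by (simp add: divide_neg_pos)
    finally show ?thesis using wnz by (intro exI[of _ "(1/norm w) *\<^sub>R w"]) simp
  qed
  have t0Bad: "t0 \<in> Bad" using unit[OF neg] t0 by (auto simp: Bad_def)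
  have bdd: "bdd_below Bad" by (auto simp: Bad_def bdd_below_def)
  define T where "T = Inf Bad"
  have T0: "0 \<le> T" unfolding T_def using t0Bad by (intro cInf_greatest) (auto simp: Bad_def)
  have Tt0: "T \<le> t0" unfolding T_def using t0Bad bdd by (rule cInf_lower)
  have before: "q s w \<ge> 0" if "0 \<le> s" "s < T" for s w
  proof (rule ccontr)
    assume "\<not> q s w \<ge> 0"
    then have "q s w < 0" by simp
    then obtain w' where "norm w' = 1" "q s w' < 0" using unit by blast
    then have "s \<in> Bad" using that Tt0 by (auto simp: Bad_def)
    then have "T \<le> s" unfolding T_def using bdd by (rule cInf_lower)
    with that show False by simp
  qed
  have atT: "q T w \<ge> 0" for w
  proof (cases "T = 0")
    case True
    then show ?thesis using init[of w] by (cases "w = 0") (auto simp: q_def less_imp_le)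
  next
    case False
    then have Tpos: "T > 0" using T0 by simp
    show ?thesis
    proof (rule ccontr)
      assume "\<not> q T w \<ge> 0"
      then have e: "- q T w > 0" by simp
      from contq[of w] T0 obtain d where d: "d > 0" and
        dd: "\<And>x'. x' \<in> {0..} \<Longrightarrow> dist x' T < d \<Longrightarrow> dist (q x' w) (q T w) < - q T w"
        unfolding continuous_on_iff by (metis atLeast_iff e)
      define s where "s = max 0 (T - d/2)"
      have "dist s T < d" using d Tpos by (auto simp: s_def dist_real_def)
      then have "dist (q s w) (q T w) < - q T w" using dd[of s] by (simp add: s_def)
      then have "q s w < 0" by (simp add: dist_real_def)
      moreover have "0 \<le> s" "s < T" using d Tpos by (auto simp: s_def)
      ultimately show False using before[of s w] by linarith
    qed
  qed
  have TnBad: "T \<notin> Bad" using atT by (auto simp: Bad_def not_less[symmetric])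
  have seq: "\<exists>s w. T < s \<and> s < T + 1/(Suc n) \<and> s \<le> t0 \<and> norm w = 1 \<and> q s w < 0" for n
  proof -
    have "Inf Bad < T + 1/(Suc n)" unfolding T_def by simp
    then obtain s where s: "s \<in> Bad" "s < T + 1/(Suc n)" using cInf_less_iff[of Bad] t0Bad bdd by auto
    have "T \<le> s" unfolding T_def by (rule cInf_lower[OF s(1) bdd])
    moreover have "s \<noteq> T" using s(1) TnBad by auto
    ultimately have "T < s" by simp
    moreover obtain w where "norm w = 1" "q s w < 0" "s \<le> t0" using s(1) unfolding Bad_def by blast
    ultimately show ?thesis using s(2) by blast
  qed
  then obtain s w where sw: "\<And>n. T < s n \<and> s n < T + 1/(Suc n) \<and> s n \<le> t0 \<and> norm (w n) = 1 \<and> q (s n) (w n) < 0"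
    by metis
  have "seq_compact (sphere (0::real^'n) 1)" by (simp add: compact_imp_seq_compact)
  moreover have "\<forall>n. w n \<in> sphere 0 1" using sw by simp
  ultimately obtain ws r where ws: "ws \<in> sphere 0 1" and r: "strict_mono r" and wlim: "(w \<circ> r) \<longlonglongrightarrow> ws"
    by (rule seq_compactE)
  have slim: "s \<longlonglongrightarrow> T"
  proof (rule tendsto_sandwich[of "\<lambda>n. T" _ _ "\<lambda>n. T + 1/(Suc n)"])
    show "\<forall>\<^sub>F n in sequentially. T \<le> s n" using sw by (simp add: less_imp_le)
    show "\<forall>\<^sub>F n in sequentially. s n \<le> T + 1/(Suc n)" using sw by (simp add: less_imp_le)
    show "(\<lambda>n. T + 1 / real (Suc n)) \<longlonglongrightarrow> T"
      using tendsto_add[OF tendsto_const LIMSEQ_inverse_real_of_nat, of T] by (simp add: inverse_eq_divide)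
  qed simp
  define y where "y = s \<circ> r"
  define v where "v = w \<circ> r"
  have ylim: "y \<longlonglongrightarrow> T" unfolding y_def by (rule LIMSEQ_subseq_LIMSEQ[OF slim r])
  have vlim: "v \<longlonglongrightarrow> ws" using wlim by (simp add: v_def)
  have yv: "T < y n" "norm (v n) = 1" "q (y n) (v n) < 0" for n using sw by (auto simp: y_def v_def)
  have ypos: "0 \<le> y n" for n using T0 yv(1)[of n] by simp
  have Rlim: "(\<lambda>n. R (y n)) \<longlonglongrightarrow> R T"
    by (rule continuous_on_tendsto_compose[OF contR ylim]) (use T0 ypos in \<open>auto intro!: always_eventually\<close>)
  have qlim: "(\<lambda>n. q (y n) (v n)) \<longlonglongrightarrow> q T ws"
    unfolding q_def by (intro tendsto_inner vlim bounded_bilinear.tendsto[OF bb_mv] Rlim)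
  have "q T ws \<le> 0"
    by (rule tendsto_upperbound[OF qlim]) (use yv in \<open>auto intro!: always_eventually less_imp_le\<close>)
  with atT have qT: "q T ws = 0" by (simp add: order_antisym)
  have psdT: "\<forall>w. w \<bullet> (R T *v w) \<ge> 0" using atT by (simp add: q_def)
  have nullT: "R T *v ws = 0" by (rule psd_null[OF sym[OF T0] psdT]) (use qT in \<open>simp add: q_def\<close>)
  have wsnz: "ws \<noteq> 0" using ws by auto
  have cpos: "ws \<bullet> (R' T *v ws) > 0" by (rule cond[OF T0 wsnz psdT nullT])
  define E where "E n = (1 / norm (y n - T)) *\<^sub>R (R (y n) - (R T + (y n - T) *\<^sub>R R' T))" for n
  have "((\<lambda>z. (1 / norm (z - T)) *\<^sub>R (R z - (R T + (z - T) *\<^sub>R R' T))) \<longlongrightarrow> 0) (at T within {0..})"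
    using der[OF T0] unfolding has_vector_derivative_def has_derivative_within by simp
  moreover have "filterlim y (at T within {0..}) sequentially"
    unfolding filterlim_at using ylim yv T0 by (auto intro!: always_eventually) (smt (verit) yv(1))+
  ultimately have Elim: "E \<longlonglongrightarrow> 0" unfolding E_def by (rule filterlim_compose)
  have Rdecomp: "R (y n) = R T + (y n - T) *\<^sub>R (R' T + E n)" for n
  proof -
    have pos: "y n - T > 0" using yv(1)[of n] by simp
    then have "norm (y n - T) = y n - T" by simp
    then have "(y n - T) *\<^sub>R E n = R (y n) - (R T + (y n - T) *\<^sub>R R' T)"
      using pos by (simp add: E_def)
    then show ?thesis by (simp add: scaleR_add_right algebra_simps)
  qed
  have flim: "(\<lambda>n. v n \<bullet> ((R' T + E n) *v v n)) \<longlonglongrightarrow> ws \<bullet> ((R' T + 0) *v ws)"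
    by (intro tendsto_inner vlim bounded_bilinear.tendsto[OF bb_mv] tendsto_add tendsto_const Elim)
  then have "eventually (\<lambda>n. v n \<bullet> ((R' T + E n) *v v n) > 0) sequentially"
    using cpos by (intro order_tendstoD(1)) auto
  then have "eventually (\<lambda>n. False) sequentially"
  proof eventually_elim
    case (elim n)
    have "q (y n) (v n) = q T (v n) + (y n - T) * (v n \<bullet> ((R' T + E n) *v v n))"
      by (simp add: q_def Rdecomp matrix_vector_mult_add_rdistrib scaleR_matrix_vector_assoc[symmetric] inner_add_right)
    moreover have "q T (v n) \<ge> 0" by (rule atT)
    moreover have "(y n - T) * (v n \<bullet> ((R' T + E n) *v v n)) > 0" using elim yv(1)[of n] by simp
    ultimately have "q (y n) (v n) > 0" by linarith
    with yv(3)[of n] show False by simp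
  qed
  then show False by simp
qed


lemma oc_pos_ge1: "obs_coords l blk pos \<Longrightarrow> 1 \<le> pos k"
  unfolding obs_coords_def bij_betw_def by auto

lemma oc_pos_le: "obs_coords l blk pos \<Longrightarrow> pos k \<le> l (blk k)"
  unfolding obs_coords_def bij_betw_def by auto

lemma oc_inj: "obs_coords l blk pos \<Longrightarrow> blk k = blk k' \<Longrightarrow> pos k = pos k' \<Longrightarrow> k = k'"
  unfolding obs_coords_def bij_betw_def inj_on_def by auto

lemma oc_surj: "obs_coords l blk pos \<Longrightarrow> 1 \<le> j \<Longrightarrow> j \<le> l i \<Longrightarrow> \<exists>k. blk k = i \<and> pos k = j"
  unfolding obs_coords_def bij_betw_def by (metis (mono_tags, lifting) case_prodI image_iff mem_Collect_eq prod.inject)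

lemma oc_pos_card: 
  assumes oc: "obs_coords l blk (pos::'n::finite \<Rightarrow> nat)"
  shows "pos k \<le> CARD('n)"
proof -
  let ?i = "blk k"
  have "\<forall>j\<in>{1..l ?i}. \<exists>k'. blk k' = ?i \<and> pos k' = j" using oc_surj[OF oc] by auto
  then obtain f where f: "\<And>j. j \<in> {1..l ?i} \<Longrightarrow> blk (f j) = ?i \<and> pos (f j) = j" by metis
  have "inj_on f {1..l ?i}" by (metis f inj_onI)
  then have "card (f ` {1..l ?i}) = l ?i" by (simp add: card_image)
  moreover have "card (f ` {1..l ?i}) \<le> CARD('n)" by (rule card_mono) auto
  ultimately have "l ?i \<le> CARD('n)" by simp
  then show ?thesis using oc_pos_le[OF oc, of k] by simp
qed

lemma row_sq:
  fixes M :: "real^'n^'m"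
  assumes zo: "\<And>j. M$i$j = 0 \<or> M$i$j = 1"
    and one: "\<And>j j'. M$i$j \<noteq> 0 \<Longrightarrow> M$i$j' \<noteq> 0 \<Longrightarrow> j = j'"
  shows "((M *v x)$i)^2 = (\<Sum>j\<in>UNIV. M$i$j * (x$j)^2)"
proof (cases "\<exists>j. M$i$j \<noteq> 0")
  case True
  then obtain j0 where j0: "M$i$j0 \<noteq> 0" by blast
  then have m1: "M$i$j0 = 1" using zo by metis
  have z: "\<And>j. j \<noteq> j0 \<Longrightarrow> M$i$j = 0" using one j0 by blast
  have "(M *v x)$i = (\<Sum>j\<in>UNIV. M$i$j * x$j)" by (simp add: matrix_vector_mult_def)
  also have "\<dots> = (\<Sum>j\<in>UNIV. if j = j0 then x$j0 else 0)" 
    by (rule sum.cong) (auto simp: z m1)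
  finally have a: "(M *v x)$i = x$j0" using m1 by simp
  have "(\<Sum>j\<in>UNIV. M$i$j * (x$j)^2) = (\<Sum>j\<in>UNIV. if j = j0 then (x$j0)^2 else 0)" 
    by (rule sum.cong) (auto simp: z m1)
  then show ?thesis using a by simp
next
  case False
  then show ?thesis by (simp add: matrix_vector_mult_def)
qed


lemma sum_sq_weighted_rows:
  fixes M :: "real^'n^'m"
  assumes zo: "\<And>i j. M$i$j = 0 \<or> M$i$j = 1"
    and one: "\<And>i j j'. M$i$j \<noteq> 0 \<Longrightarrow> M$i$j' \<noteq> 0 \<Longrightarrow> j = j'"
  shows "(\<Sum>i\<in>UNIV. w i * ((M *v x)$i)^2) = (\<Sum>j\<in>UNIV. (\<Sum>i\<in>UNIV. w i * M$i$j) * (x$j)^2)"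
proof -
  have "(\<Sum>i\<in>UNIV. w i * ((M *v x)$i)^2) = (\<Sum>i\<in>UNIV. \<Sum>j\<in>UNIV. w i * M$i$j * (x$j)^2)"
    by (simp add: row_sq[OF zo one] sum_distrib_left mult.assoc)
  also have "\<dots> = (\<Sum>j\<in>UNIV. \<Sum>i\<in>UNIV. w i * M$i$j * (x$j)^2)" by (rule sum.swap)
  also have "\<dots> = (\<Sum>j\<in>UNIV. (\<Sum>i\<in>UNIV. w i * M$i$j) * (x$j)^2)" by (simp add: sum_distrib_right)
  finally show ?thesis .
qed

lemma Abar_shift:
  assumes oc: "obs_coords l blk pos"
  shows "(\<Sum>k\<in>UNIV. w (pos k) * ((Abar blk pos *v x)$k)^2)
         = (\<Sum>k\<in>UNIV. (if 2 \<le> pos k then w (pos k - 1) else 0) * (x$k)^2)"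
proof -
  let ?A = "Abar blk pos"
  have zo: "\<And>i j. ?A$i$j = 0 \<or> ?A$i$j = 1" by (simp add: Abar_def)
  have one: "\<And>i j j'. ?A$i$j \<noteq> 0 \<Longrightarrow> ?A$i$j' \<noteq> 0 \<Longrightarrow> j = j'"
    by (auto simp: Abar_def split: if_splits intro: oc_inj[OF oc])
  have col: "(\<Sum>k\<in>UNIV. w (pos k) * ?A$k$k') = (if 2 \<le> pos k' then w (pos k' - 1) else 0)" for k'
  proof (cases "2 \<le> pos k'")
    case True
    have "1 \<le> pos k' - 1" "pos k' - 1 \<le> l (blk k')" using True oc_pos_le[OF oc, of k'] by auto
    then obtain k0 where k0: "blk k0 = blk k'" "pos k0 = pos k' - 1" using oc_surj[OF oc] by blast
    have "?A$k$k' = (if k = k0 then 1 else 0)" for k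
      using k0 True by (auto simp: Abar_def intro: oc_inj[OF oc])
    then have "(\<Sum>k\<in>UNIV. w (pos k) * ?A$k$k') = (\<Sum>k\<in>UNIV. if k = k0 then w (pos k0) else 0)"
      by (intro sum.cong) auto
    then show ?thesis using True k0 by simp
  next
    case False
    then have "?A$k$k' = 0" for k using oc_pos_ge1[OF oc, of k] by (auto simp: Abar_def)
    then show ?thesis using False by simp
  qed
  show ?thesis
    using sum_sq_weighted_rows[OF zo one, where w="\<lambda>k. w (pos k)" and x=x] by (simp add: col)
qed

lemma Cbar_sq:
  assumes oc: "obs_coords l blk pos"
  shows "(norm (Cbar blk pos *v v))^2 = (\<Sum>k\<in>UNIV. (if pos k = 1 then 1 else 0) * (v$k)^2)"
proof -
  let ?C = "Cbar blk pos"
  have zo: "\<And>i j. ?C$i$j = 0 \<or> ?C$i$j = 1" by (simp add: Cbar_def)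
  have one: "\<And>i j j'. ?C$i$j \<noteq> 0 \<Longrightarrow> ?C$i$j' \<noteq> 0 \<Longrightarrow> j = j'"
    by (auto simp: Cbar_def split: if_splits intro: oc_inj[OF oc])
  have col: "(\<Sum>i\<in>UNIV. ?C$i$k) = (if pos k = 1 then 1 else 0)" for k
  proof -
    have "?C$i$k = (if i = blk k \<and> pos k = 1 then 1 else 0)" for i by (auto simp: Cbar_def)
    then show ?thesis by simp
  qed
  have "(norm (?C *v v))^2 = (\<Sum>i\<in>UNIV. 1 * ((?C *v v)$i)^2)" by (simp add: norm_vec_sq)
  also have "\<dots> = (\<Sum>k\<in>UNIV. (\<Sum>i\<in>UNIV. 1 * ?C$i$k) * (v$k)^2)"
    by (rule sum_sq_weighted_rows[OF zo one])
  also have "\<dots> = (\<Sum>k\<in>UNIV. (if pos k = 1 then 1 else 0) * (v$k)^2)"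
    using col by simp
  finally show ?thesis .
qed

lemma sub_dist_sq: "(sub_dist pos j x y)^2 = (\<Sum>k'\<in>{k'. pos k' \<le> j}. (x $ k' - y $ k')^2)"
  unfolding sub_dist_def by (simp add: sum_nonneg)

lemma rho_sum:
  fixes v :: "real^'n" and pos :: "'n \<Rightarrow> nat"
  assumes anti: "\<And>i j. i \<le> j \<Longrightarrow> w j \<le> w i" and nn: "\<And>j. 0 \<le> w j"
  shows "(\<Sum>k\<in>UNIV. w (pos k) * (sub_dist pos (pos k) v 0)^2) \<le> CARD('n) * (\<Sum>k\<in>UNIV. w (pos k) * (v$k)^2)"
proof -
  have "(\<Sum>k\<in>UNIV. w (pos k) * (sub_dist pos (pos k) v 0)^2)
      = (\<Sum>k\<in>UNIV. \<Sum>k'\<in>UNIV. if pos k' \<le> pos k then w (pos k) * (v$k')^2 else 0)"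
    by (simp add: sub_dist_sq sum_distrib_left sum.If_cases Int_def)
  also have "\<dots> = (\<Sum>k'\<in>UNIV. \<Sum>k\<in>UNIV. if pos k' \<le> pos k then w (pos k) * (v$k')^2 else 0)"
    by (rule sum.swap)
  also have "\<dots> \<le> (\<Sum>k'\<in>UNIV. \<Sum>k::'n\<in>UNIV. w (pos k') * (v$k')^2)"
    by (intro sum_mono) (auto intro!: mult_right_mono anti simp: nn)
  also have "\<dots> = CARD('n) * (\<Sum>k\<in>UNIV. w (pos k) * (v$k)^2)"
    by (simp add: sum_distrib_left)
  finally show ?thesis .
qed


lemma young: fixes p q m x y :: real
  assumes "0 \<le> p" "0 \<le> q" "m^2 \<le> p*q"
  shows "\<bar>m*x*y\<bar> \<le> (p*x^2 + q*y^2)/2"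
proof -
  have "m^2 * (x^2 * y^2) \<le> (p * q) * (x^2 * y^2)" using assms(3) by (intro mult_right_mono) auto
  then have "(2*\<bar>m*x*y\<bar>)^2 \<le> 4*(p*x^2)*(q*y^2)"
    by (simp add: power_mult_distrib abs_mult power2_abs mult.assoc mult.left_commute)
  also have "(p*x^2 + q*y^2)^2 - 4*(p*x^2)*(q*y^2) = (p*x^2 - q*y^2)^2"
    by (simp add: power2_eq_square algebra_simps)
  then have "4*(p*x^2)*(q*y^2) \<le> (p*x^2 + q*y^2)^2"
    by (metis diff_ge_0_iff_ge zero_le_power2)
  finally have "(2*\<bar>m*x*y\<bar>)^2 \<le> (p*x^2 + q*y^2)^2" .
  then have "2*\<bar>m*x*y\<bar> \<le> p*x^2 + q*y^2"
    by (rule power2_le_imp_le) (use assms in simp)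
  then show ?thesis by simp
qed

definition cc :: "real \<Rightarrow> nat \<Rightarrow> nat \<Rightarrow> real" where "cc R T i = R ^ ((T - i)^2)"

lemma cc_ge1: "1 \<le> R \<Longrightarrow> 1 \<le> cc R T i" by (simp add: cc_def one_le_power)

lemma cc_anti: "1 \<le> R \<Longrightarrow> i \<le> j \<Longrightarrow> cc R T j \<le> cc R T i"
  unfolding cc_def by (intro power_increasing power_mono) auto

lemma cc_conv:
  assumes "1 \<le> i" "i + 1 \<le> T"
  shows "cc R T (i-1) * cc R T (i+1) = R^2 * (cc R T i)^2"
proof -
  obtain d where T: "T = i + 1 + d" using assms(2) by (metis le_add_diff_inverse)
  have "(T - (i-1))^2 + (T - (i+1))^2 = 2 + (T-i)^2 * 2" 
    using assms(1) unfolding T by (simp add: power2_eq_square algebra_simps)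
  then show ?thesis unfolding cc_def by (metis power_add power_mult)
qed

lemma cc_E3:
  assumes "2 \<le> i" "i + 2 \<le> T" "1 \<le> R"
  shows "R^2 * (cc R T i)^2 \<le> cc R T (i-2) * cc R T (i+2)"
proof -
  obtain d where T: "T = i + 2 + d" using assms(2) by (metis le_add_diff_inverse)
  have e: "(T - (i-2))^2 + (T - (i+2))^2 = 2 + (T-i)^2 * 2 + 6" 
    using assms(1) unfolding T by (simp add: power2_eq_square algebra_simps)
  have "R^2 * (cc R T i)^2 = R^(2 + (T-i)^2 * 2)" unfolding cc_def by (metis power_add power_mult)
  also have "\<dots> \<le> R^(2 + (T-i)^2 * 2 + 6)" using assms(3) by (intro power_increasing) auto
  also have "\<dots> = cc R T (i-2) * cc R T (i+2)" unfolding cc_def e[symmetric] by (simp add: power_add)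
  finally show ?thesis .
qed

lemma cc_E4:
  assumes "2 \<le> i" "i \<le> T" "1 \<le> R"
  shows "R^2 * cc R T i \<le> cc R T (i-2)"
proof -
  obtain d where T: "T = i + d" using assms(2) by (metis le_add_diff_inverse)
  have e: "(T - (i-2))^2 = (T-i)^2 + 2 + (4*d + 2)" 
    using assms(1) unfolding T by (simp add: power2_eq_square algebra_simps)
  have "R^2 * cc R T i = R^((T-i)^2 + 2)" unfolding cc_def by (simp add: power_add power2_eq_square)
  also have "\<dots> \<le> R^((T-i)^2 + 2 + (4*d+2))" using assms(3) by (intro power_increasing) auto
  also have "\<dots> = cc R T (i-2)" unfolding cc_def e by simp
  finally show ?thesis .
qed


definition dg :: "('n::finite \<Rightarrow> real) \<Rightarrow> real^'n^'n" where "dg f = (\<chi> i j. if i = j then f i else 0)"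

lemma dg_mv: "(dg f *v w) $ k = f k * w $ k"
proof -
  have "(dg f *v w) $ k = (\<Sum>j\<in>UNIV. (if k = j then f k else 0) * w$j)"
    by (simp add: dg_def matrix_vector_mult_def)
  also have "\<dots> = (\<Sum>j\<in>UNIV. if j = k then f k * w$k else 0)" by (rule sum.cong) auto
  finally show ?thesis by simp
qed

lemma dg_transpose: "transpose (dg f) = dg f"
  by (simp add: dg_def transpose_def vec_eq_iff)

definition Smat :: "('n::finite \<Rightarrow> 'p) \<Rightarrow> ('n \<Rightarrow> nat) \<Rightarrow> real \<Rightarrow> nat \<Rightarrow> real^'n^'n" where
 "Smat blk pos R T = dg (\<lambda>k. cc R T (2*pos k - 1))
     - (dg (\<lambda>k. cc R T (2*pos k)) ** Abar blk pos + transpose (Abar blk pos) ** dg (\<lambda>k. cc R T (2*pos k)))"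

lemma inner_sum: "(x::real^'n) \<bullet> y = (\<Sum>k\<in>UNIV. x$k * y$k)"
  by (simp add: inner_vec_def)

lemma Smat_quad: "v \<bullet> (Smat blk pos R T *v w) = (\<Sum>k\<in>UNIV. cc R T (2*pos k - 1) * v$k * w$k)
   - (\<Sum>k\<in>UNIV. cc R T (2*pos k) * v$k * (Abar blk pos *v w)$k)
   - (\<Sum>k\<in>UNIV. cc R T (2*pos k) * (Abar blk pos *v v)$k * w$k)"
proof -
  let ?A = "Abar blk pos" and ?a = "dg (\<lambda>k. cc R T (2*pos k - 1))" and ?b = "dg (\<lambda>k. cc R T (2*pos k))"
  have "v \<bullet> (Smat blk pos R T *v w) = v \<bullet> (?a *v w) - v \<bullet> (?b *v (?A *v w)) - v \<bullet> (transpose ?A *v (?b *v w))"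
    unfolding Smat_def
    by (simp add: matrix_vector_mult_diff_rdistrib matrix_vector_mult_add_rdistrib matrix_vector_mul_assoc inner_diff_right inner_add_right)
  also have "v \<bullet> (transpose ?A *v (?b *v w)) = (?A *v v) \<bullet> (?b *v w)"
    by (metis inner_mv_transpose transpose_transpose)
  finally show ?thesis by (simp add: inner_sum dg_mv mult_ac)
qed

lemma Smat_sym: "transpose (Smat blk pos R T) = Smat blk pos R T"
proof -
  have t: "transpose (X - Y) = transpose X - transpose (Y::real^'n^'n)" "transpose (X + Y) = transpose X + transpose Y" for X Y :: "real^'n^'n"
    by (simp_all add: transpose_def vec_eq_iff)
  show ?thesis unfolding Smat_def by (simp add: t matrix_transpose_mul dg_transpose add.commute)
qed


lemma perk:
  fixes R a b g b1 xa xb xe xc xd :: real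
  assumes R: "R > 0" and nn: "0 \<le> a" "0 \<le> b" "0 \<le> g" "0 \<le> b1"
    and F1: "R^2 * a^2 \<le> g * b" and F3: "R^2 * b^2 \<le> g * b1"
  shows "a*xa*(xb+xe) - b*xa*(xc+xd) - b*xb*(xb+xe) \<le> (2*g/R)*xa^2 + (b/R)*xb^2 + (b/(2*R))*xe^2
          + (b1/(2*R))*(xc^2+xd^2) + (R*b/2)*xe^2 - b*xb^2"
proof -
  have c1: "a^2 \<le> (g/R)*(b/R)" using F1 R by (simp add: field_simps power2_eq_square)
  have c3: "b^2 \<le> (g/R)*(b1/R)" using F3 R by (simp add: field_simps power2_eq_square)
  have c5: "b^2 \<le> (b/R)*(R*b)" using R by (simp add: power2_eq_square)
  have gR: "0 \<le> g/R" "0 \<le> b/R" "0 \<le> b1/R" "0 \<le> R*b" using nn R by auto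
  have y1: "\<bar>a*xa*xb\<bar> \<le> ((g/R)*xa^2 + (b/R)*xb^2)/2" by (rule young[OF gR(1) gR(2) c1])
  have y2: "\<bar>a*xa*xe\<bar> \<le> ((g/R)*xa^2 + (b/R)*xe^2)/2" by (rule young[OF gR(1) gR(2) c1])
  have y3: "\<bar>b*xa*xc\<bar> \<le> ((g/R)*xa^2 + (b1/R)*xc^2)/2" by (rule young[OF gR(1) gR(3) c3])
  have y4: "\<bar>b*xa*xd\<bar> \<le> ((g/R)*xa^2 + (b1/R)*xd^2)/2" by (rule young[OF gR(1) gR(3) c3])
  have y5: "\<bar>b*xb*xe\<bar> \<le> ((b/R)*xb^2 + (R*b)*xe^2)/2" by (rule young[OF gR(2) gR(4) c5])
  have e: "a*xa*(xb+xe) - b*xa*(xc+xd) - b*xb*(xb+xe) = a*xa*xb + a*xa*xe - b*xa*xc - b*xa*xd - b*xb*xe - b*xb^2"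
    by (simp add: algebra_simps power2_eq_square)
  have "(2*g/R)*xa^2 + (b/R)*xb^2 + (b/(2*R))*xe^2 + (b1/(2*R))*(xc^2+xd^2) + (R*b/2)*xe^2 - b*xb^2
     = ((g/R)*xa^2 + (b/R)*xb^2)/2 + ((g/R)*xa^2 + (b/R)*xe^2)/2 + ((g/R)*xa^2 + (b1/R)*xc^2)/2
       + ((g/R)*xa^2 + (b1/R)*xd^2)/2 + ((b/R)*xb^2 + (R*b)*xe^2)/2 - b*xb^2"
    using R by (simp add: field_simps)
  then show ?thesis using e y1 y2 y3 y4 y5 by (smt (verit) abs_ge_self abs_minus_cancel abs_le_iff)
qed

lemma perk_pd:
  fixes R a b a1 xa xb :: real
  assumes R: "R > 0" and nn: "0 \<le> a" "0 \<le> a1" and F2: "R^2 * b^2 \<le> a * a1"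
  shows "a*xa*xa - b*xa*xb - b*xb*xa \<ge> (a/2)*xa^2 - (2*a1/R^2)*xb^2"
proof -
  have c: "b^2 \<le> (a/2)*(2*a1/R^2)" using F2 R by (simp add: field_simps power2_eq_square)
  have y: "\<bar>b*xa*xb\<bar> \<le> ((a/2)*xa^2 + (2*a1/R^2)*xb^2)/2" by (rule young) (use nn R c in auto)
  show ?thesis using y by (simp add: power2_eq_square algebra_simps)
qed


lemma cert:
  fixes pos :: "'n::finite \<Rightarrow> nat" and v phi :: "real^'n" and L R :: real and T :: nat
  assumes oc: "obs_coords l blk pos" and L: "0 \<le> L"
    and Rdef: "R = 7 + 3 * L^2 * CARD('n)" and Tdef: "T = 2 * CARD('n) + 2"
  shows "v \<bullet> (Smat blk pos R T *v v) \<ge> (norm v)^2/4"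
    and "(\<And>k. \<bar>phi$k\<bar> \<le> L * sub_dist pos (pos k) v 0) \<Longrightarrow>
         v \<bullet> (Smat blk pos R T *v (Abar blk pos *v v + phi)) \<le> cc R T 0 * (norm (Cbar blk pos *v v))^2 - (norm v)^2/2"
proof -
  define N where "N = CARD('n)"
  have "0 \<le> 3 * L^2 * real CARD('n)" by simp
  then have R1: "1 \<le> R" and R0: "0 < R" and R7: "7 \<le> R" unfolding Rdef by linarith+
  have p1: "1 \<le> pos k" and pN: "pos k \<le> N" for k using oc_pos_ge1[OF oc] oc_pos_card[OF oc] by (auto simp: N_def)
  define a where "a k = cc R T (2*pos k - 1)" for k
  define b where "b k = cc R T (2*pos k)" for k
  define g where "g k = cc R T (2*(pos k - 1))" for k
  define a1 where "a1 k = cc R T (2*pos k + 1)" for k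
  define b1 where "b1 k = cc R T (2*pos k + 2)" for k
  have ge1: "1 \<le> a k" "1 \<le> b k" "1 \<le> g k" "1 \<le> a1 k" "1 \<le> b1 k" for k
    unfolding a_def b_def g_def a1_def b1_def using cc_ge1[OF R1] by auto
  have nn0: "0 \<le> a k" "0 \<le> b k" "0 \<le> g k" "0 \<le> a1 k" "0 \<le> b1 k" for k using ge1[of k] by linarith+
  have F1: "R^2 * (a k)^2 \<le> g k * b k" for k
  proof -
    have "cc R T (2*pos k - 1 - 1) * cc R T (2*pos k - 1 + 1) = R^2 * (cc R T (2*pos k - 1))^2"
      by (rule cc_conv) (use p1[of k] pN[of k] Tdef N_def in auto)
    moreover have "2*pos k - 1 - 1 = 2*(pos k - 1)" "2*pos k - 1 + 1 = 2*pos k" using p1[of k] by auto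
    ultimately show ?thesis by (simp add: a_def b_def g_def)
  qed
  have F2: "R^2 * (b k)^2 \<le> a k * a1 k" for k
  proof -
    have "cc R T (2*pos k - 1) * cc R T (2*pos k + 1) = R^2 * (cc R T (2*pos k))^2"
      using cc_conv[of "2*pos k" T R] p1[of k] pN[of k] Tdef N_def by auto
    then show ?thesis by (simp add: a_def b_def a1_def)
  qed
  have F3: "R^2 * (b k)^2 \<le> g k * b1 k" for k
  proof -
    have "R^2 * (cc R T (2*pos k))^2 \<le> cc R T (2*pos k - 2) * cc R T (2*pos k + 2)"
      by (rule cc_E3) (use p1[of k] pN[of k] Tdef N_def R1 in auto)
    moreover have "2*pos k - 2 = 2*(pos k - 1)" by simp
    ultimately show ?thesis by (simp add: b_def g_def b1_def)
  qed
  have F4: "R^2 * b k \<le> g k" for k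
  proof -
    have "R^2 * cc R T (2*pos k) \<le> cc R T (2*pos k - 2)"
      by (rule cc_E4) (use p1[of k] pN[of k] Tdef N_def R1 in auto)
    moreover have "2*pos k - 2 = 2*(pos k - 1)" by simp
    ultimately show ?thesis by (simp add: b_def g_def)
  qed
  define G where "G = (\<Sum>k\<in>UNIV. g k * (v$k)^2)"
  have Gv: "(norm v)^2 \<le> G"
    unfolding G_def norm_vec_sq by (intro sum_mono) (use ge1 in \<open>simp add: mult_le_cancel_right1\<close>)
  define u where "u = Abar blk pos *v v"
  have S1: "(\<Sum>k\<in>UNIV. b k * (u$k)^2) = (\<Sum>k\<in>UNIV. (if 2 \<le> pos k then g k else 0) * (v$k)^2)"
    using Abar_shift[OF oc, where w="\<lambda>j. cc R T (2*j)" and x=v] unfolding u_def b_def g_def by simp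
  have S2: "cc R T 0 * (norm (Cbar blk pos *v v))^2 = (\<Sum>k\<in>UNIV. (if pos k = 1 then g k else 0) * (v$k)^2)"
    unfolding Cbar_sq[OF oc] sum_distrib_left by (intro sum.cong) (auto simp: g_def)
  have S12: "(\<Sum>k\<in>UNIV. b k * (u$k)^2) + cc R T 0 * (norm (Cbar blk pos *v v))^2 = G"
    unfolding S1 S2 G_def sum.distrib[symmetric]
  proof (intro sum.cong refl)
    fix k
    have "pos k = 1 \<or> 2 \<le> pos k" using p1[of k] by linarith
    then show "(if 2 \<le> pos k then g k else 0) * (v$k)^2 + (if pos k = 1 then g k else 0) * (v$k)^2 = g k * (v$k)^2"
      by auto
  qed
  have shift1: "(\<Sum>k\<in>UNIV. b1 k * ((Abar blk pos *v x)$k)^2) \<le> (\<Sum>k\<in>UNIV. b k * (x$k)^2)" for x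
  proof -
    have "(\<Sum>k\<in>UNIV. b1 k * ((Abar blk pos *v x)$k)^2) = (\<Sum>k\<in>UNIV. (if 2 \<le> pos k then cc R T (2*(pos k - 1) + 2) else 0) * (x$k)^2)"
      using Abar_shift[OF oc, where w="\<lambda>j. cc R T (2*j+2)" and x=x] by (simp add: b1_def)
    also have "\<dots> \<le> (\<Sum>k\<in>UNIV. b k * (x$k)^2)"
    proof (intro sum_mono)
      fix k
      have "2 \<le> pos k \<Longrightarrow> 2*(pos k - 1) + 2 = 2*pos k" by simp
      then show "(if 2 \<le> pos k then cc R T (2*(pos k - 1) + 2) else 0) * (x$k)^2 \<le> b k * (x$k)^2"
        using ge1(2)[of k] by (auto simp: b_def simp del: add_2_eq_Suc' add_2_eq_Suc intro: mult_right_mono)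
    qed
    finally show ?thesis .
  qed
  have shifta: "(\<Sum>k\<in>UNIV. a1 k * (u$k)^2) \<le> (\<Sum>k\<in>UNIV. a k * (v$k)^2)"
  proof -
    have "(\<Sum>k\<in>UNIV. a1 k * (u$k)^2) = (\<Sum>k\<in>UNIV. (if 2 \<le> pos k then cc R T (2*(pos k - 1) + 1) else 0) * (v$k)^2)"
      using Abar_shift[OF oc, where w="\<lambda>j. cc R T (2*j+1)" and x=v] by (simp add: a1_def u_def)
    also have "\<dots> \<le> (\<Sum>k\<in>UNIV. a k * (v$k)^2)"
    proof (intro sum_mono)
      fix k
      have "2 \<le> pos k \<Longrightarrow> 2*(pos k - 1) + 1 = 2*pos k - 1" by simp
      then show "(if 2 \<le> pos k then cc R T (2*(pos k - 1) + 1) else 0) * (v$k)^2 \<le> a k * (v$k)^2"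
        using ge1(1)[of k] by (auto simp: a_def intro: mult_right_mono)
    qed
    finally show ?thesis .
  qed
  have bvG: "(\<Sum>k\<in>UNIV. b k * (v$k)^2) \<le> G / R^2"
  proof -
    have "(\<Sum>k\<in>UNIV. b k * (v$k)^2) \<le> (\<Sum>k\<in>UNIV. (g k / R^2) * (v$k)^2)"
      by (intro sum_mono mult_right_mono) (use F4 R0 in \<open>auto simp: field_simps mult.commute\<close>)
    also have "\<dots> = G / R^2" by (simp add: G_def sum_divide_distrib)
    finally show ?thesis .
  qed
  show "v \<bullet> (Smat blk pos R T *v v) \<ge> (norm v)^2/4"
  proof -
    have q0: "v \<bullet> (Smat blk pos R T *v v) = (\<Sum>k\<in>UNIV. a k * v$k * v$k) - (\<Sum>k\<in>UNIV. b k * v$k * u$k) - (\<Sum>k\<in>UNIV. b k * u$k * v$k)"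
      unfolding Smat_quad a_def b_def u_def by (rule refl)
    have q: "v \<bullet> (Smat blk pos R T *v v) = (\<Sum>k\<in>UNIV. a k * v$k * v$k - b k * v$k * u$k - b k * u$k * v$k)"
      unfolding q0 by (simp only: sum_subtractf)
    also have "\<dots> \<ge> (\<Sum>k\<in>UNIV. (a k/2) * (v$k)^2 - (2*a1 k/R^2) * (u$k)^2)"
      by (intro sum_mono perk_pd R0) (use ge1 F2 in \<open>auto intro: order_trans[OF zero_le_one]\<close>)
    finally have "v \<bullet> (Smat blk pos R T *v v) \<ge> (\<Sum>k\<in>UNIV. a k * (v$k)^2)/2 - (2/R^2) * (\<Sum>k\<in>UNIV. a1 k * (u$k)^2)"
      by (simp add: sum_subtractf sum_divide_distrib sum_distrib_left mult.assoc)
    moreover have "(2/R^2) * (\<Sum>k\<in>UNIV. a1 k * (u$k)^2) \<le> (1/4) * (\<Sum>k\<in>UNIV. a k * (v$k)^2)"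
    proof -
      have "2/R^2 \<le> 1/4" proof -
        have "7*7 \<le> R * R" using R7 by (intro mult_mono) auto
        then show ?thesis using R0 by (simp add: field_simps power2_eq_square)
      qed
      moreover have "0 \<le> (\<Sum>k\<in>UNIV. a1 k * (u$k)^2)" using nn0 by (auto intro!: sum_nonneg)
      ultimately show ?thesis using shifta by (smt (verit) mult_mono mult_nonneg_nonneg zero_le_divide_iff zero_le_numeral zero_le_power2)
    qed
    moreover have "(norm v)^2 \<le> (\<Sum>k\<in>UNIV. a k * (v$k)^2)"
      unfolding norm_vec_sq by (intro sum_mono) (use ge1 in \<open>simp add: mult_le_cancel_right1\<close>)
    ultimately show ?thesis by linarith
  qed
  assume phiL: "\<And>k. \<bar>phi$k\<bar> \<le> L * sub_dist pos (pos k) v 0"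
  define z where "z = Abar blk pos *v u"
  define psi where "psi = Abar blk pos *v phi"
  have phisq: "(phi$k)^2 \<le> L^2 * (sub_dist pos (pos k) v 0)^2" for k
  proof -
    have "\<bar>phi$k\<bar>^2 \<le> (L * sub_dist pos (pos k) v 0)^2" by (rule power_mono[OF phiL]) simp
    then show ?thesis by (simp add: power_mult_distrib)
  qed
  have X: "(\<Sum>k\<in>UNIV. b k * (phi$k)^2) \<le> L^2 * N * (G / R^2)"
  proof -
    have "(\<Sum>k\<in>UNIV. b k * (phi$k)^2) \<le> (\<Sum>k\<in>UNIV. L^2 * (cc R T (2 * pos k) * (sub_dist pos (pos k) v 0)^2))"
    proof (intro sum_mono)
      fix k
      have "b k * (phi$k)^2 \<le> b k * (L^2 * (sub_dist pos (pos k) v 0)^2)"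
        by (rule mult_left_mono[OF phisq nn0(2)])
      then show "b k * (phi$k)^2 \<le> L^2 * (cc R T (2 * pos k) * (sub_dist pos (pos k) v 0)^2)"
        by (simp add: b_def mult_ac)
    qed
    also have "\<dots> = L^2 * (\<Sum>k\<in>UNIV. cc R T (2 * pos k) * (sub_dist pos (pos k) v 0)^2)"
      by (simp add: sum_distrib_left)
    also have "\<dots> \<le> L^2 * (N * (\<Sum>k\<in>UNIV. b k * (v$k)^2))"
      unfolding N_def b_def
      by (intro mult_left_mono rho_sum) (use R1 cc_anti cc_ge1 in \<open>auto intro: order_trans[OF zero_le_one]\<close>)
    also have "\<dots> \<le> L^2 * (N * (G / R^2))"
      by (intro mult_left_mono bvG) auto
    finally show ?thesis by simp
  qed
  have q: "v \<bullet> (Smat blk pos R T *v (Abar blk pos *v v + phi)) =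
      (\<Sum>k\<in>UNIV. a k * v$k * (u$k + phi$k) - b k * v$k * (z$k + psi$k) - b k * u$k * (u$k + phi$k))"
  proof -
    have e1: "v \<bullet> (Smat blk pos R T *v (u + phi)) = (\<Sum>k\<in>UNIV. a k * v$k * (u + phi)$k) - (\<Sum>k\<in>UNIV. b k * v$k * (Abar blk pos *v (u + phi))$k) - (\<Sum>k\<in>UNIV. b k * u$k * (u + phi)$k)"
      unfolding a_def b_def u_def by (rule Smat_quad)
    have e2: "Abar blk pos *v (u + phi) = z + psi" by (simp add: z_def psi_def matrix_vector_right_distrib)
    have "v \<bullet> (Smat blk pos R T *v (Abar blk pos *v v + phi)) = (\<Sum>k\<in>UNIV. a k * v$k * (u$k + phi$k)) - (\<Sum>k\<in>UNIV. b k * v$k * (z$k + psi$k)) - (\<Sum>k\<in>UNIV. b k * u$k * (u$k + phi$k))"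
      using e1 unfolding e2 vector_add_component u_def[symmetric] .
    then show ?thesis by (simp only: sum_subtractf)
  qed
  also have "\<dots> \<le> (\<Sum>k\<in>UNIV. (2*g k/R)*(v$k)^2 + (b k/R)*(u$k)^2 + (b k/(2*R))*(phi$k)^2
          + (b1 k/(2*R))*((z$k)^2+(psi$k)^2) + (R*b k/2)*(phi$k)^2 - b k*(u$k)^2)"
    by (intro sum_mono perk R0) (use ge1 F1 F3 in \<open>auto intro: order_trans[OF zero_le_one]\<close>)
  also have "\<dots> = (2/R) * G + (1/R) * (\<Sum>k\<in>UNIV. b k*(u$k)^2) + (1/(2*R)) * (\<Sum>k\<in>UNIV. b k*(phi$k)^2)
      + (1/(2*R)) * (\<Sum>k\<in>UNIV. b1 k*(z$k)^2) + (1/(2*R)) * (\<Sum>k\<in>UNIV. b1 k*(psi$k)^2)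
      + (R/2) * (\<Sum>k\<in>UNIV. b k*(phi$k)^2) - (\<Sum>k\<in>UNIV. b k*(u$k)^2)"
    by (simp add: G_def sum.distrib sum_subtractf sum_distrib_left algebra_simps sum_divide_distrib)
  finally have main: "v \<bullet> (Smat blk pos R T *v (Abar blk pos *v v + phi)) \<le> \<dots>" .
  define Bu where "Bu = (\<Sum>k\<in>UNIV. b k*(u$k)^2)"
  define Bp where "Bp = (\<Sum>k\<in>UNIV. b k*(phi$k)^2)"
  have z1: "(\<Sum>k\<in>UNIV. b1 k*(z$k)^2) \<le> Bu" unfolding z_def Bu_def by (rule shift1)
  have z2: "(\<Sum>k\<in>UNIV. b1 k*(psi$k)^2) \<le> Bp" unfolding psi_def Bp_def by (rule shift1)
  have Bu0: "0 \<le> Bu" unfolding Bu_def using nn0 by (auto intro!: sum_nonneg)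
  have "0 \<le> cc R T 0 * (norm (Cbar blk pos *v v))^2" using cc_ge1[OF R1, of T 0] by simp
  then have BuG: "Bu \<le> G" using S12 unfolding Bu_def by linarith
  have G0: "0 \<le> G" using Gv by (smt (verit) zero_le_power2)
  have Bp0: "0 \<le> Bp" unfolding Bp_def using nn0 by (auto intro!: sum_nonneg)
  have BpX: "Bp \<le> L^2 * N * G / R^2" using X by (simp add: Bp_def)
  have "v \<bullet> (Smat blk pos R T *v (Abar blk pos *v v + phi)) \<le> G/2 - Bu"
  proof -
    have a1: "(1/(2*R)) * (\<Sum>k\<in>UNIV. b1 k*(z$k)^2) \<le> (1/(2*R)) * G"
      using z1 BuG R0 by (intro mult_left_mono) auto
    have a2: "(1/(2*R)) * (\<Sum>k\<in>UNIV. b1 k*(psi$k)^2) \<le> (1/(2*R)) * Bp"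
      using z2 R0 by (intro mult_left_mono) auto
    have a3: "(1/R) * Bu \<le> (1/R) * G" using BuG R0 by (intro mult_left_mono) auto
    have a4: "(1/R) * Bp \<le> L^2 * N * G / R"
    proof -
      have M0: "0 \<le> L^2 * N * G" using G0 by simp
      have R21: "1 \<le> R^2" using R1 by (simp add: one_le_power)
      have "L^2 * N * G * 1 \<le> L^2 * N * G * R^2" by (rule mult_left_mono[OF R21 M0])
      then have "L^2 * N * G / R^2 \<le> L^2 * N * G" using R0 by (simp add: divide_le_eq)
      then have "Bp \<le> L^2 * N * G" using BpX by linarith
      then show ?thesis using R0 by (simp add: divide_right_mono)
    qed
    have a5: "(R/2) * Bp \<le> L^2 * N * G / (2*R)"
    proof -
      have "R^2 * Bp \<le> L^2 * N * G" using BpX R0 by (simp add: field_simps)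
      then show ?thesis using R0 by (simp add: field_simps power2_eq_square)
    qed
    have "G/2 = R * G / (2*R)" using R0 by simp
    then have "G/2 = (7 + 3 * L^2 * N) * G / (2*R)" using Rdef N_def by simp
    then have "G/2 = (2/R) * G + (1/R) * G + (1/(2*R)) * G + (L^2 * N * G / R) + L^2 * N * G / (2*R)"
      using R0 by (simp add: field_simps)
    moreover have "(1/(2*R))*Bp + (1/(2*R))*Bp = (1/R)*Bp" by simp
    ultimately show ?thesis using main a1 a2 a3 a4 a5 unfolding Bu_def[symmetric] Bp_def[symmetric]
      by linarith
  qed
  also have "G/2 - Bu = cc R T 0 * (norm (Cbar blk pos *v v))^2 - G/2" using S12 unfolding Bu_def by simp
  finally show "v \<bullet> (Smat blk pos R T *v (Abar blk pos *v v + phi)) \<le> cc R T 0 * (norm (Cbar blk pos *v v))^2 - (norm v)^2/2"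
    using Gv by simp
qed


lemma fbx_deriv:
  assumes C2: "has_C2_derivs (UNIV \<times> U) (\<lambda>z. fb (fst z) (snd z)) D1 D2" and vU: "v \<in> U"
  shows "((\<lambda>\<xi>. fb \<xi> v) has_derivative (\<lambda>h. D1 (x, v) (h, 0))) (at x)"
proof -
  have d: "\<And>z. z \<in> UNIV \<times> U \<Longrightarrow> ((\<lambda>z. fb (fst z) (snd z)) has_derivative blinfun_apply (D1 z)) (at z within UNIV \<times> U)"
    using C2 unfolding has_C2_derivs_def by blast
  have p: "((\<lambda>\<xi>. (\<xi>, v)) has_derivative (\<lambda>h. (h, 0))) (at x within UNIV)"
    by (auto intro!: derivative_eq_intros)
  have "((\<lambda>\<xi>. (\<lambda>z. fb (fst z) (snd z)) (\<xi>, v)) has_derivative (\<lambda>h. blinfun_apply (D1 (x, v)) (h, 0))) (at x within UNIV)"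
    by (rule has_derivative_in_compose2[OF d _ _ p]) (use vU in auto)
  then show ?thesis by simp
qed

lemma D1_deriv:
  assumes C2: "has_C2_derivs (UNIV \<times> U) (\<lambda>z. fb (fst z) (snd z)) D1 D2" and vU: "v \<in> U"
  shows "((\<lambda>\<xi>. D1 (\<xi>, v)) has_derivative (\<lambda>h. D2 (x, v) (h, 0))) (at x)"
proof -
  have d: "\<And>z. z \<in> UNIV \<times> U \<Longrightarrow> (D1 has_derivative blinfun_apply (D2 z)) (at z within UNIV \<times> U)"
    using C2 unfolding has_C2_derivs_def by blast
  have p: "((\<lambda>\<xi>. (\<xi>, v)) has_derivative (\<lambda>h. (h, 0))) (at x within UNIV)"
    by (auto intro!: derivative_eq_intros)
  have "((\<lambda>\<xi>. D1 (\<xi>, v)) has_derivative (\<lambda>h. D2 (x, v) (h, 0))) (at x within UNIV)"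
    by (rule has_derivative_in_compose2[OF d _ _ p]) (use vU in auto)
  then show ?thesis by simp
qed

lemma sub_dist_scale: "sub_dist pos j (x + h *\<^sub>R w) x = \<bar>h\<bar> * sub_dist pos j w 0"
proof -
  have "(\<Sum>k'\<in>{k'. pos k' \<le> j}. ((x + h *\<^sub>R w) $ k' - x $ k')^2) = h^2 * (\<Sum>k'\<in>{k'. pos k' \<le> j}. (w $ k' - 0 $ k')^2)"
    by (simp add: sum_distrib_left power_mult_distrib)
  then show ?thesis unfolding sub_dist_def by (simp add: real_sqrt_mult)
qed

lemma fbx_comp_bound:
  fixes fb :: "real^'n \<Rightarrow> real^'m \<Rightarrow> real^'n" and x w :: "real^'n" and v :: "real^'m"
  assumes C2: "has_C2_derivs (UNIV \<times> U) (\<lambda>z. fb (fst z) (snd z)) D1 D2" and vU: "v \<in> U"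
    and lip: "\<And>x \<xi> v k. v \<in> U \<Longrightarrow> \<bar>fb x v $ k - fb \<xi> v $ k\<bar> \<le> L * sub_dist pos (pos k) x \<xi>"
  shows "\<bar>D1 (x, v) (w, 0) $ k\<bar> \<le> L * sub_dist pos (pos k) w 0"
proof -
  define phi where "phi s = fb (x + s *\<^sub>R w) v $ k" for s :: real
  have l: "((\<lambda>s. x + s *\<^sub>R w) has_derivative (\<lambda>s. s *\<^sub>R w)) (at 0)"
    by (auto intro!: derivative_eq_intros)
  have "((\<lambda>s. fb (x + s *\<^sub>R w) v) has_derivative (\<lambda>s. D1 (x, v) (s *\<^sub>R w, 0))) (at 0)"
    using has_derivative_compose[OF l fbx_deriv[OF C2 vU, of "x + 0 *\<^sub>R w"]] by (simp add: o_def)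
  then have "(phi has_derivative (\<lambda>s. D1 (x, v) (s *\<^sub>R w, 0) $ k)) (at 0)"
    unfolding phi_def by (rule bounded_linear.has_derivative[OF bounded_linear_vec_nth])
  moreover have "(\<lambda>s. D1 (x, v) (s *\<^sub>R w, 0) $ k) = (\<lambda>s. s * (D1 (x, v) (w, 0) $ k))"
  proof
    fix s :: real
    have eq: "(s *\<^sub>R w, 0::real^'m) = s *\<^sub>R (w, 0)" by simp
    show "D1 (x, v) (s *\<^sub>R w, 0) $ k = s * (D1 (x, v) (w, 0) $ k)"
      unfolding eq blinfun.scaleR_right vector_scaleR_component by simp
  qed
  ultimately have "(phi has_real_derivative (D1 (x, v) (w, 0) $ k)) (at 0)"
    by (simp add: has_field_derivative_def mult_commute_abs)
  then have lim: "((\<lambda>h. (phi (0 + h) - phi 0) / h) \<longlongrightarrow> D1 (x, v) (w, 0) $ k) (at 0)"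
    unfolding DERIV_def .
  have "\<bar>D1 (x, v) (w, 0) $ k\<bar> \<le> L * sub_dist pos (pos k) w 0"
  proof (rule tendsto_upperbound[OF tendsto_rabs[OF lim]])
    have Lnn: "0 \<le> L * sub_dist pos (pos k) w 0"
    proof -
      have "0 \<le> \<bar>fb (x + 1 *\<^sub>R w) v $ k - fb x v $ k\<bar>" by simp
      also have "\<dots> \<le> L * sub_dist pos (pos k) (x + 1 *\<^sub>R w) x" by (rule lip[OF vU])
      finally show ?thesis by (simp only: sub_dist_scale)
    qed
    show "\<forall>\<^sub>F h in at 0. \<bar>(phi (0 + h) - phi 0) / h\<bar> \<le> L * sub_dist pos (pos k) w 0"
    proof (intro always_eventually allI)
      fix h :: real
      show "\<bar>(phi (0 + h) - phi 0) / h\<bar> \<le> L * sub_dist pos (pos k) w 0"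
      proof (cases "h = 0")
        case True then show ?thesis using Lnn by simp
      next
        case False
        then have hnz: "h \<noteq> 0" .
        have "\<bar>phi h - phi 0\<bar> \<le> L * sub_dist pos (pos k) (x + h *\<^sub>R w) x"
          unfolding phi_def using lip[OF vU] by simp
        also have "\<dots> = \<bar>h\<bar> * (L * sub_dist pos (pos k) w 0)" by (simp add: sub_dist_scale)
        finally show ?thesis
          using hnz by (simp add: abs_divide divide_le_eq mult.commute)
      qed
    qed
  qed simp
  then show ?thesis .
qed

lemma fb_remainder:
  fixes fb :: "real^'n \<Rightarrow> real^'m \<Rightarrow> real^'n" and x y :: "real^'n" and v :: "real^'m"
  assumes C2: "has_C2_derivs (UNIV \<times> U) (\<lambda>z. fb (fst z) (snd z)) D1 D2" and vU: "v \<in> U"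
    and b2: "\<And>x \<xi> v. v \<in> U \<Longrightarrow> norm (D2 (x, v) (\<xi>, 0) (\<xi>, 0)) \<le> L * (norm \<xi>)\<^sup>2"
    and L: "0 \<le> L"
  shows "norm (fb y v - fb x v - D1 (x, v) (y - x, 0)) \<le> 3 * L * (norm (y - x))^2"
proof -
  define e where "e = y - x"
  define chi where "chi = (\<lambda>s::real. D1 (x + s *\<^sub>R e, v) (e, 0))"
  define chi' where "chi' = (\<lambda>s::real. D2 (x + s *\<^sub>R e, v) (e, 0) (e, 0))"
  define psi where "psi = (\<lambda>s::real. fb (x + s *\<^sub>R e) v)"
  have lin: "((\<lambda>s. x + s *\<^sub>R e) has_derivative (\<lambda>s. s *\<^sub>R e)) (at s)" for s
    by (auto intro!: derivative_eq_intros)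
  have sc: "(s *\<^sub>R e, 0::real^'m) = s *\<^sub>R (e, 0::real^'m)" for s by simp
  have dpsi: "(psi has_vector_derivative chi s) (at s)" for s
  proof -
    have "(psi has_derivative (\<lambda>t. D1 (x + s *\<^sub>R e, v) (t *\<^sub>R e, 0))) (at s)"
      using has_derivative_compose[OF lin fbx_deriv[OF C2 vU, of "x + s *\<^sub>R e"]] by (simp add: o_def psi_def)
    then show ?thesis unfolding has_vector_derivative_def chi_def sc blinfun.scaleR_right .
  qed
  have dchi: "(chi has_vector_derivative chi' s) (at s)" for s
  proof -
    have "((\<lambda>t. D1 (x + t *\<^sub>R e, v)) has_derivative (\<lambda>t. D2 (x + s *\<^sub>R e, v) (t *\<^sub>R e, 0))) (at s)"
      using has_derivative_compose[OF lin D1_deriv[OF C2 vU, of "x + s *\<^sub>R e"]] by (simp add: o_def)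
    then have "((\<lambda>t. blinfun_apply (D1 (x + t *\<^sub>R e, v)) (e, 0)) has_derivative
        (\<lambda>t. blinfun_apply (D2 (x + s *\<^sub>R e, v) (t *\<^sub>R e, 0)) (e, 0))) (at s)"
      by (rule bounded_linear.has_derivative[OF bounded_bilinear.bounded_linear_left[OF bounded_bilinear_blinfun_apply]])
    then show ?thesis unfolding has_vector_derivative_def chi_def chi'_def sc blinfun.scaleR_right blinfun.scaleR_left .
  qed
  have chi'b: "norm (chi' s) \<le> L * (norm e)^2" for s unfolding chi'_def by (rule b2[OF vU])
  have chib: "norm (chi s - chi 0) \<le> 3 * L * (norm e)^2" if "s \<in> {0..1}" for s
  proof -
    have "norm (chi s - chi 0 - (s - 0) *\<^sub>R chi' 0) \<le> norm (s - 0) * (2 * L * (norm e)^2)"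
    proof (rule vector_differentiable_bound_linearization[where S=UNIV])
      show "\<And>t. t \<in> UNIV \<Longrightarrow> (chi has_vector_derivative chi' t) (at t within UNIV)" using dchi by simp
      fix t
      have "norm (chi' t - chi' 0) \<le> norm (chi' t) + norm (chi' 0)" by (rule norm_triangle_ineq4)
      then show "norm (chi' t - chi' 0) \<le> 2 * L * (norm e)^2" using chi'b[of t] chi'b[of 0] by linarith
    qed auto
    then have "norm (chi s - chi 0) \<le> \<bar>s\<bar> * (2 * L * (norm e)^2) + \<bar>s\<bar> * norm (chi' 0)"
      by (smt (verit) norm_scaleR norm_triangle_ineq4 real_norm_def diff_zero norm_triangle_sub)
    also have "\<dots> \<le> 1 * (2 * L * (norm e)^2) + 1 * (L * (norm e)^2)"
      using that chi'b[of 0] L by (intro add_mono mult_mono) auto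
    finally show ?thesis by simp
  qed
  have "norm (psi 1 - psi 0 - (1 - 0) *\<^sub>R chi 0) \<le> norm (1 - 0::real) * (3 * L * (norm e)^2)"
  proof (rule vector_differentiable_bound_linearization[where S="{0..1}"])
    show "\<And>t. t \<in> {0..1} \<Longrightarrow> (psi has_vector_derivative chi t) (at t within {0..1})"
      using dpsi by (blast intro: has_vector_derivative_at_within)
  qed (use chib in \<open>auto simp: closed_segment_eq_real_ivl\<close>)
  then show ?thesis by (simp add: psi_def chi_def e_def)
qed

lemma f_frechet:
  assumes f_form: "\<And>x v. f x v = Abar blk pos *v x + fb x v"
    and C2: "has_C2_derivs (UNIV \<times> U) (\<lambda>z. fb (fst z) (snd z)) D1 D2" and vU: "v \<in> U"
  shows "matrix (frechet_derivative (\<lambda>\<xi>. f \<xi> v) (at x)) *v w = Abar blk pos *v w + D1 (x, v) (w, 0)"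
proof -
  have "((\<lambda>\<xi>. Abar blk pos *v \<xi> + fb \<xi> v) has_derivative (\<lambda>h. Abar blk pos *v h + D1 (x, v) (h, 0))) (at x)"
    by (intro has_derivative_add fbx_deriv[OF C2 vU] bounded_linear.has_derivative[OF matrix_vector_mul_bounded_linear] has_derivative_ident)
  moreover have "(\<lambda>\<xi>. f \<xi> v) = (\<lambda>\<xi>. Abar blk pos *v \<xi> + fb \<xi> v)" using f_form by auto
  ultimately have d: "((\<lambda>\<xi>. f \<xi> v) has_derivative (\<lambda>h. Abar blk pos *v h + D1 (x, v) (h, 0))) (at x)" by simp
  then have fe: "frechet_derivative (\<lambda>\<xi>. f \<xi> v) (at x) = (\<lambda>h. Abar blk pos *v h + D1 (x, v) (h, 0))"
    by (rule frechet_derivative_at[symmetric])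
  have "linear (\<lambda>h. Abar blk pos *v h + D1 (x, v) (h, 0))"
    using has_derivative_bounded_linear[OF d] bounded_linear.linear by blast
  then show ?thesis unfolding fe by (simp add: matrix_works)
qed

lemma h_frechet:
  assumes h_form: "\<And>x v. h x v = Cbar blk pos *v x + hb v"
  shows "matrix (frechet_derivative (\<lambda>\<xi>. h \<xi> v) (at x)) = Cbar blk pos"
proof -
  have "((\<lambda>\<xi>. Cbar blk pos *v \<xi> + hb v) has_derivative (\<lambda>w. Cbar blk pos *v w)) (at x)"
    by (auto intro!: derivative_eq_intros bounded_linear.has_derivative[OF matrix_vector_mul_bounded_linear])
  moreover have "(\<lambda>\<xi>. h \<xi> v) = (\<lambda>\<xi>. Cbar blk pos *v \<xi> + hb v)" using h_form by auto
  ultimately have "frechet_derivative (\<lambda>\<xi>. h \<xi> v) (at x) = (\<lambda>w. Cbar blk pos *v w)"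
    using frechet_derivative_at by metis
  then show ?thesis by simp
qed


lemma at_pos_within: "(t::real) > 0 \<Longrightarrow> at t within {0..} = at t"
  by (rule at_within_interior) simp

lemma deriv_nonpos_decr:
  fixes W W' :: "real \<Rightarrow> real"
  assumes der: "\<And>t. 0 \<le> t \<Longrightarrow> (W has_real_derivative W' t) (at t within {0..})"
    and nonpos: "\<And>s. 0 < s \<Longrightarrow> s < t \<Longrightarrow> W' s \<le> 0" and t: "0 \<le> t"
  shows "W t \<le> W 0"
proof -
  have cont: "continuous_on {0..t} W"
  proof -
    have "continuous (at s within {0..t}) W" if "s \<in> {0..t}" for s
    proof -
      have "continuous (at s within {0..}) W" using der[of s] that by (auto intro: DERIV_continuous)
      then show ?thesis by (rule continuous_within_subset) auto
    qed
    then show ?thesis by (simp add: continuous_on_eq_continuous_within)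
  qed
  show ?thesis
  proof (rule DERIV_nonpos_imp_decreasing_open[OF t _ _])
    show "\<exists>y. (W has_real_derivative y) (at x) \<and> y \<le> 0" if "0 < x" "x < t" for x
      using der[of x] that nonpos[of x] by (auto simp: at_pos_within)
  qed (rule cont)
qed

lemma invariance:
  fixes W W' :: "real \<Rightarrow> real"
  assumes der: "\<And>t. 0 \<le> t \<Longrightarrow> (W has_real_derivative W' t) (at t within {0..})"
    and W0: "W 0 < B" and neg: "\<And>t. 0 \<le> t \<Longrightarrow> W t \<le> B \<Longrightarrow> W' t \<le> 0"
    and t: "0 \<le> t"
  shows "W t \<le> W 0"
proof -
  have contW: "continuous_on {0..} W"
  proof -
    have "continuous (at s within {0..}) W" if "s \<in> {0..}" for s
      using der[of s] that by (auto intro: DERIV_continuous)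
    then show ?thesis by (simp add: continuous_on_eq_continuous_within)
  qed
  have below: "W s < B" if s: "0 \<le> s" for s
  proof (rule ccontr)
    assume "\<not> W s < B"
    define S where "S = {r \<in> {0..s}. B \<le> W r}"
    have Sne: "S \<noteq> {}" using \<open>\<not> W s < B\<close> s by (auto simp: S_def)
    have Sb: "bdd_below S" by (auto simp: S_def bdd_below_def)
    have cs: "continuous_on {0..s} W" using contW by (rule continuous_on_subset) auto
    have Scl: "closed S" unfolding S_def
      by (rule continuous_on_closed_Collect_le[OF continuous_on_const cs closed_atLeastAtMost])
    define T where "T = Inf S"
    have TS: "T \<in> S" unfolding T_def by (rule closed_contains_Inf[OF Sne Sb Scl])
    have T0: "0 \<le> T" and WT: "B \<le> W T" using TS by (auto simp: S_def)
    have Tpos: "0 < T" using T0 WT W0 by (cases "T = 0") auto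
    have bef: "W r < B" if "0 \<le> r" "r < T" for r
    proof (rule ccontr)
      assume "\<not> W r < B"
      then have "r \<in> S" using that TS by (auto simp: S_def)
      then have "T \<le> r" unfolding T_def by (rule cInf_lower[OF _ Sb])
      with that show False by simp
    qed
    have "W T \<le> W 0"
      by (rule deriv_nonpos_decr[OF der _ T0]) (use bef neg in \<open>auto intro: less_imp_le\<close>)
    with WT W0 show False by simp
  qed
  show ?thesis by (rule deriv_nonpos_decr[OF der _ t]) (use below neg in \<open>auto intro: less_imp_le\<close>)
qed

lemma gronwall0:
  fixes phi phi' :: "real \<Rightarrow> real"
  assumes der: "\<And>t. 0 \<le> t \<Longrightarrow> (phi has_real_derivative phi' t) (at t within {0..})"
    and p0: "phi 0 = 0" and nn: "\<And>t. 0 \<le> t \<Longrightarrow> 0 \<le> phi t"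
    and K: "\<And>t. 0 \<le> t \<Longrightarrow> t \<le> T1 \<Longrightarrow> phi' t \<le> K * phi t"
    and t: "0 \<le> t" "t \<le> T1"
  shows "phi t = 0"
proof -
  define psi where "psi s = phi s * exp (- K * s)" for s
  define psi' where "psi' s = phi' s * exp (- K * s) + (exp (- K * s) * (- K)) * phi s" for s
  have dpsi: "(psi has_real_derivative psi' s) (at s within {0..})" if "0 \<le> s" for s
  proof -
    have e: "((\<lambda>s. exp (- K * s)) has_real_derivative exp (- K * s) * (- K)) (at s within {0..})"
      by (auto intro!: derivative_eq_intros)
    show ?thesis unfolding psi_def psi'_def by (rule DERIV_mult[OF der[OF that] e])
  qed
  have "psi t \<le> psi 0"
  proof (rule deriv_nonpos_decr[OF dpsi _ t(1)])
    fix s assume s: "0 < s" "s < t"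
    have "phi' s * exp (- K * s) \<le> (K * phi s) * exp (- K * s)"
      using K[of s] s t by (intro mult_right_mono) auto
    then show "psi' s \<le> 0" by (simp add: psi'_def algebra_simps)
  qed auto
  then have "phi t * exp (- K * t) \<le> 0" by (simp add: psi_def p0)
  then have "phi t \<le> 0" by (simp add: mult_le_0_iff)
  with nn[OF t(1)] show ?thesis by simp
qed

lemma mat_norm_bound:
  fixes X :: "real^'n^'m"
  assumes "\<And>v. norm (X *v v) \<le> c * norm v"
  shows "norm X \<le> sqrt (CARD('n)) * c"
proof -
  have c0: "0 \<le> c" using assms[of "axis undefined 1"] by (smt (verit) norm_axis_1 norm_ge_zero mult_cancel_left1)
  have "(norm X)^2 = (\<Sum>j\<in>UNIV. (norm (X *v axis j 1))^2)"
    by (simp add: matrix_vector_mult_basis norm_columns_sq)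
  also have "\<dots> \<le> (\<Sum>j\<in>(UNIV::'n set). c^2)"
  proof (rule sum_mono)
    fix j :: 'n
    have "norm (X *v axis j 1) \<le> c" using assms[of "axis j 1"] by simp
    then show "(norm (X *v axis j 1))^2 \<le> c^2" by (rule power_mono) simp
  qed
  also have "\<dots> = (sqrt (CARD('n)) * c)^2" by (simp add: power_mult_distrib)
  finally show ?thesis by (rule power2_le_imp_le) (use c0 in simp)
qed

lemma pd_uniform:
  fixes P0 :: "real^'n^'n"
  assumes "\<And>v. v \<noteq> 0 \<Longrightarrow> 0 < v \<bullet> (P0 *v v)"
  shows "\<exists>p0>0. \<forall>w. p0 * (norm w)^2 \<le> w \<bullet> (P0 *v w)"
proof -
  have "continuous_on (sphere 0 1) (\<lambda>w::real^'n. w \<bullet> (P0 *v w))"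
    by (intro continuous_intros bounded_bilinear.continuous_on[OF bb_mv])
  moreover have "sphere (0::real^'n) 1 \<noteq> {}" using norm_axis_1[of undefined] by (metis mem_sphere_0 empty_iff)
  ultimately obtain w0 where w0: "w0 \<in> sphere 0 1" and mn: "\<And>y. y \<in> sphere 0 1 \<Longrightarrow> w0 \<bullet> (P0 *v w0) \<le> y \<bullet> (P0 *v y)"
    using continuous_attains_inf[OF compact_sphere] by blast
  define p0 where "p0 = w0 \<bullet> (P0 *v w0)"
  have "w0 \<noteq> 0" using w0 by auto
  then have p0: "p0 > 0" using assms unfolding p0_def by blast
  have "p0 * (norm w)^2 \<le> w \<bullet> (P0 *v w)" for w
  proof (cases "w = 0")
    case True then show ?thesis by simp
  next
    case False
    define y where "y = (1/norm w) *\<^sub>R w"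
    have "y \<in> sphere 0 1" using False by (simp add: y_def)
    then have "p0 \<le> y \<bullet> (P0 *v y)" using mn unfolding p0_def by blast
    also have "y \<bullet> (P0 *v y) = (w \<bullet> (P0 *v w)) / (norm w)^2"
      by (simp add: y_def matrix_vector_mult_scaleR power2_eq_square)
    finally show ?thesis using False by (simp add: field_simps)
  qed
  with p0 show ?thesis by blast
qed

lemma bl_transpose: "bounded_linear (transpose :: real^'n^'m \<Rightarrow> real^'m^'n)"
proof
  show "transpose (x + y) = transpose x + transpose y" for x y :: "real^'n^'m"
    by (simp add: transpose_def vec_eq_iff)
  show "transpose (r *\<^sub>R x) = r *\<^sub>R transpose x" for r and x :: "real^'n^'m" by (rule transpose_scalar)
  show "\<exists>K. \<forall>x::real^'n^'m. norm (transpose x) \<le> norm x * K"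
    by (intro exI[of _ 1]) (simp add: norm_transpose)
qed


lemmas mm_diff_left = bounded_bilinear.diff_left[OF bb_mm]
lemmas mm_diff_right = bounded_bilinear.diff_right[OF bb_mm]
lemmas mm_scaleR_left = bounded_bilinear.scaleR_left[OF bb_mm]
lemmas mm_scaleR_right = bounded_bilinear.scaleR_right[OF bb_mm]
lemmas mm_minus_left = bounded_bilinear.minus_left[OF bb_mm]
lemmas mm_minus_right = bounded_bilinear.minus_right[OF bb_mm]
lemmas mm_add_left = bounded_bilinear.add_left[OF bb_mm]
lemmas mm_add_right = bounded_bilinear.add_right[OF bb_mm]

lemma inv_deriv:
  fixes P Q :: "real \<Rightarrow> real^'n^'n"
  assumes dP: "(P has_vector_derivative P') (at t within S)"
    and inv: "\<And>s. s \<in> S \<Longrightarrow> Q s ** P s = mat 1 \<and> P s ** Q s = mat 1"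
    and bnd: "\<And>s. s \<in> S \<Longrightarrow> norm (Q s) \<le> B"
    and tS: "t \<in> S"
  shows "(Q has_vector_derivative (- (Q t ** P' ** Q t))) (at t within S)"
proof -
  define D where "D = - (Q t ** P' ** Q t)"
  define E where "E s = (1 / norm (s - t)) *\<^sub>R (P s - (P t + (s - t) *\<^sub>R P'))" for s
  have Elim: "(E \<longlongrightarrow> 0) (at t within S)"
    using dP unfolding has_vector_derivative_def has_derivative_within E_def by simp
  have Pcont: "(P \<longlongrightarrow> P t) (at t within S)"
    using has_vector_derivative_continuous[OF dP] by (simp add: continuous_within)
  have iden: "Q s - Q t = Q s ** (P t - P s) ** Q t" if "s \<in> S" for s
  proof -
    have "Q s ** (P t - P s) ** Q t = Q s ** (P t ** Q t) - (Q s ** P s) ** Q t"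
      by (simp add: mm_diff_left mm_diff_right matrix_mul_assoc)
    also have "\<dots> = Q s - Q t" using inv[OF that] inv[OF tS] by simp
    finally show ?thesis by simp
  qed
  have Bnn: "0 \<le> B" using bnd[OF tS] norm_ge_zero order_trans by blast
  have key: "norm ((1 / norm (s - t)) *\<^sub>R (Q s - (Q t + (s - t) *\<^sub>R D)))
      \<le> B * norm (P t - P s) * norm (Q t) * norm P' * norm (Q t) + B * norm (E s) * norm (Q t)"
    if sS: "s \<in> S" for s
  proof (cases "s = t")
    case True then show ?thesis using Bnn by simp
  next
    case False
    define h where "h = s - t"
    define n where "n = norm h"
    have n: "n > 0" using False by (simp add: n_def h_def)
    have PE: "P s - P t - h *\<^sub>R P' = n *\<^sub>R E s" using n by (simp add: E_def n_def h_def)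
    have eq: "Q s - (Q t + h *\<^sub>R D) = - (Q s ** (n *\<^sub>R E s) ** Q t) - h *\<^sub>R ((Q s - Q t) ** P' ** Q t)"
    proof -
      have "Q s - (Q t + h *\<^sub>R D) = Q s ** (P t - P s) ** Q t + h *\<^sub>R (Q t ** P' ** Q t)"
        using iden[OF sS] by (simp add: D_def)
      also have "P t - P s = - (P s - P t - h *\<^sub>R P') - h *\<^sub>R P'" by simp
      also have "Q s ** (- (P s - P t - h *\<^sub>R P') - h *\<^sub>R P') ** Q t + h *\<^sub>R (Q t ** P' ** Q t)
          = - (Q s ** (P s - P t - h *\<^sub>R P') ** Q t) - h *\<^sub>R ((Q s - Q t) ** P' ** Q t)"
        by (simp add: mm_diff_left mm_diff_right mm_minus_left mm_minus_right mm_scaleR_left mm_scaleR_right mm_add_left mm_add_right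
            scaleR_diff_right algebra_simps)
      finally show ?thesis unfolding PE .
    qed
    have "norm (Q s - (Q t + h *\<^sub>R D)) \<le> norm (Q s ** (n *\<^sub>R E s) ** Q t) + norm (h *\<^sub>R ((Q s - Q t) ** P' ** Q t))"
      unfolding eq by (metis norm_minus_cancel norm_triangle_ineq4)
    also have "norm (Q s ** (n *\<^sub>R E s) ** Q t) \<le> norm (Q s) * (n * norm (E s)) * norm (Q t)"
    proof -
      have "norm (Q s ** (n *\<^sub>R E s) ** Q t) \<le> norm (Q s ** (n *\<^sub>R E s)) * norm (Q t)" by (rule norm_mm)
      also have "\<dots> \<le> (norm (Q s) * norm (n *\<^sub>R E s)) * norm (Q t)" by (intro mult_right_mono norm_mm) simp
      finally show ?thesis using n by simp
    qed
    also have "norm (h *\<^sub>R ((Q s - Q t) ** P' ** Q t)) \<le> n * (norm (Q s - Q t) * norm P' * norm (Q t))"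
    proof -
      have "norm ((Q s - Q t) ** P' ** Q t) \<le> norm ((Q s - Q t) ** P') * norm (Q t)" by (rule norm_mm)
      also have "\<dots> \<le> (norm (Q s - Q t) * norm P') * norm (Q t)" by (intro mult_right_mono norm_mm) simp
      finally show ?thesis by (simp add: n_def mult_left_mono)
    qed
    finally have A: "norm (Q s - (Q t + h *\<^sub>R D)) \<le> n * (norm (Q s) * norm (E s) * norm (Q t) + norm (Q s - Q t) * norm P' * norm (Q t))"
      by (simp add: algebra_simps)
    have B1: "norm (Q s - Q t) \<le> B * norm (P t - P s) * norm (Q t)"
    proof -
      have "norm (Q s - Q t) \<le> norm (Q s) * norm (P t - P s) * norm (Q t)"
      proof -
        have "norm (Q s ** (P t - P s) ** Q t) \<le> norm (Q s ** (P t - P s)) * norm (Q t)" by (rule norm_mm)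
        also have "\<dots> \<le> (norm (Q s) * norm (P t - P s)) * norm (Q t)" by (intro mult_right_mono norm_mm) simp
        finally show ?thesis unfolding iden[OF sS] .
      qed
      also have "\<dots> \<le> B * norm (P t - P s) * norm (Q t)"
        using bnd[OF sS] by (intro mult_right_mono) auto
      finally show ?thesis .
    qed
    have "norm ((1 / n) *\<^sub>R (Q s - (Q t + h *\<^sub>R D))) = norm (Q s - (Q t + h *\<^sub>R D)) / n"
      using n by (simp only: norm_scaleR) simp
    also have "\<dots> \<le> (n * (norm (Q s) * norm (E s) * norm (Q t) + norm (Q s - Q t) * norm P' * norm (Q t))) / n"
      by (rule divide_right_mono[OF A]) (use n in simp)
    also have "\<dots> = norm (Q s) * norm (E s) * norm (Q t) + norm (Q s - Q t) * norm P' * norm (Q t)"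
      using n by simp
    also have "\<dots> \<le> B * norm (E s) * norm (Q t) + B * norm (P t - P s) * norm (Q t) * norm P' * norm (Q t)"
      using bnd[OF sS] B1 by (intro add_mono mult_right_mono) auto
    finally show ?thesis by (simp add: n_def h_def add.commute)
  qed
  have g0: "((\<lambda>s. B * norm (P t - P s) * norm (Q t) * norm P' * norm (Q t) + B * norm (E s) * norm (Q t)) \<longlongrightarrow> 0) (at t within S)"
  proof -
    have "((\<lambda>s. P t - P s) \<longlongrightarrow> 0) (at t within S)" using tendsto_diff[OF tendsto_const[of "P t"] Pcont] by simp
    then have a: "((\<lambda>s. norm (P t - P s)) \<longlongrightarrow> 0) (at t within S)" by (simp add: tendsto_norm_zero)
    have b: "((\<lambda>s. norm (E s)) \<longlongrightarrow> 0) (at t within S)" using Elim by (simp add: tendsto_norm_zero)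
    have "((\<lambda>s. B * norm (P t - P s) * norm (Q t) * norm P' * norm (Q t) + B * norm (E s) * norm (Q t)) \<longlongrightarrow>
        B * 0 * norm (Q t) * norm P' * norm (Q t) + B * 0 * norm (Q t)) (at t within S)"
      by (intro tendsto_add tendsto_mult tendsto_const a b)
    then show ?thesis by simp
  qed
  have "((\<lambda>s. (1 / norm (s - t)) *\<^sub>R (Q s - (Q t + (s - t) *\<^sub>R D))) \<longlongrightarrow> 0) (at t within S)"
  proof (rule Lim_null_comparison[OF _ g0])
    show "\<forall>\<^sub>F s in at t within S. norm ((1 / norm (s - t)) *\<^sub>R (Q s - (Q t + (s - t) *\<^sub>R D)))
        \<le> B * norm (P t - P s) * norm (Q t) * norm P' * norm (Q t) + B * norm (E s) * norm (Q t)"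
      unfolding eventually_at_filter by (intro always_eventually allI impI key) 
  qed
  then show ?thesis
    unfolding has_vector_derivative_def has_derivative_within D_def[symmetric]
    by (simp add: bounded_linear_scaleR_left)
qed


locale ekf_sys =
  fixes l :: "'p::{finite,linorder} \<Rightarrow> nat"
    and blk :: "'n::finite \<Rightarrow> 'p" and pos :: "'n \<Rightarrow> nat"
    and U :: "(real^'m::finite) set" and u :: "real \<Rightarrow> real^'m"
    and fb :: "real^'n \<Rightarrow> real^'m \<Rightarrow> real^'n" and hb :: "real^'m \<Rightarrow> (real, 'p) vec"
    and f :: "real^'n \<Rightarrow> real^'m \<Rightarrow> real^'n" and h :: "real^'n \<Rightarrow> real^'m \<Rightarrow> (real, 'p) vec"
    and D1 :: "(real^'n) \<times> (real^'m) \<Rightarrow> ((real^'n) \<times> (real^'m)) \<Rightarrow>\<^sub>L (real^'n)"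
    and D2 :: "(real^'n) \<times> (real^'m) \<Rightarrow> ((real^'n) \<times> (real^'m)) \<Rightarrow>\<^sub>L ((real^'n) \<times> (real^'m)) \<Rightarrow>\<^sub>L (real^'n)"
    and L :: real and G P0 :: "real^'n^'n"
  assumes coords: "obs_coords l blk pos"
    and f_form: "\<And>x v. f x v = Abar blk pos *v x + fb x v"
    and h_form: "\<And>x v. h x v = Cbar blk pos *v x + hb v"
    and fb_lipschitz: "\<And>x \<xi> v k. v \<in> U \<Longrightarrow>
                          \<bar>fb x v $ k - fb \<xi> v $ k\<bar> \<le> L * sub_dist pos (pos k) x \<xi>"
    and fb_C2: "has_C2_derivs (UNIV \<times> U) (\<lambda>z. fb (fst z) (snd z)) D1 D2"
    and fb_second_bound: "\<And>x \<xi> v. v \<in> U \<Longrightarrow>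
                          norm (D2 (x, v) (\<xi>, 0) (\<xi>, 0)) \<le> L * (norm \<xi>)\<^sup>2"
    and u_in_U: "\<And>t. t \<ge> 0 \<Longrightarrow> u t \<in> U"
    and G_inv: "invertible G"
    and P0_pd: "pos_def_mat P0"
begin

definition "Ab = Abar blk pos"
definition "Cb = Cbar blk pos"
definition "NN = real CARD('n)"
definition "Lp = max L 0"
definition "Gam = G ** transpose G"
definition "Bg = (SOME B. B ** transpose G = mat 1)"
definition "gam = 1 / (norm Bg + 1)^2"
definition "alpha = norm Ab + sqrt NN * Lp"
definition "p0 = (SOME p. p > 0 \<and> (\<forall>w. p * (norm w)^2 \<le> w \<bullet> (P0 *v w)))"
definition "beta = (norm Cb)^2"
definition "dl = min (p0/2) (min 1 (gam / (2*(2*alpha+beta)+1)))"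
definition "RR = 7 + 3 * Lp^2 * NN"
definition "TT = 2 * CARD('n) + 2"
definition "SS = Smat blk pos RR TT"
definition "K0 = cc RR TT 0"
definition "em = 1 / (2*K0 + norm Gam * (norm SS)^2 + 1 + (norm P0 + 1)^2 * (norm SS + 1) / p0)"
definition "MM = em *\<^sub>R SS"
definition "mm = em / 4"
definition "L3 = 3 * Lp + 1"
definition "cr = gam * mm / 2"
definition "rho = gam * mm / (4 * L3)"
definition "eps = sqrt (dl * mm) * rho"

lemma Lp0: "0 \<le> Lp" by (simp add: Lp_def)

lemma lip: "v \<in> U \<Longrightarrow> \<bar>fb x v $ k - fb \<xi> v $ k\<bar> \<le> Lp * sub_dist pos (pos k) x \<xi>"
proof -
  assume v: "v \<in> U"
  have "0 \<le> sub_dist pos (pos k) x \<xi>" by (simp add: sub_dist_def sum_nonneg)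
  then have "L * sub_dist pos (pos k) x \<xi> \<le> Lp * sub_dist pos (pos k) x \<xi>"
    by (intro mult_right_mono) (auto simp: Lp_def)
  moreover have "\<bar>fb x v $ k - fb \<xi> v $ k\<bar> \<le> L * sub_dist pos (pos k) x \<xi>" by (rule fb_lipschitz[OF v])
  ultimately show ?thesis by linarith
qed

lemma b2: "v \<in> U \<Longrightarrow> norm (D2 (x, v) (\<xi>, 0) (\<xi>, 0)) \<le> Lp * (norm \<xi>)\<^sup>2"
proof -
  assume v: "v \<in> U"
  have "L * (norm \<xi>)\<^sup>2 \<le> Lp * (norm \<xi>)\<^sup>2" by (intro mult_right_mono) (auto simp: Lp_def)
  moreover have "norm (D2 (x, v) (\<xi>, 0) (\<xi>, 0)) \<le> L * (norm \<xi>)\<^sup>2" by (rule fb_second_bound[OF v])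
  ultimately show ?thesis by linarith
qed

lemma Bg: "Bg ** transpose G = mat 1"
proof -
  have "invertible (transpose G)" by (rule transpose_invertible[OF G_inv])
  then have "\<exists>B. B ** transpose G = mat 1" by (simp add: invertible_left_inverse)
  then show ?thesis unfolding Bg_def by (rule someI_ex)
qed

lemma gam_pos: "gam > 0"
proof -
  have "norm Bg + 1 > 0" by (simp add: add_nonneg_pos)
  then show ?thesis by (simp add: gam_def)
qed

lemma Gam_quad: "w \<bullet> (Gam *v w) = (norm (transpose G *v w))^2"
proof -
  have "w \<bullet> (Gam *v w) = w \<bullet> (G *v (transpose G *v w))" by (simp only: Gam_def matrix_vector_mul_assoc)
  also have "\<dots> = (transpose G *v w) \<bullet> (transpose G *v w)" by (rule inner_mv_transpose)
  finally show ?thesis by (simp add: power2_norm_eq_inner)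
qed

lemma Gam_lower: "gam * (norm w)^2 \<le> w \<bullet> (Gam *v w)"
proof -
  have "w = Bg *v (transpose G *v w)" by (metis matrix_vector_mul_assoc Bg matrix_vector_mul_lid)
  then have "norm w \<le> norm Bg * norm (transpose G *v w)" by (metis norm_mv)
  also have "\<dots> \<le> (norm Bg + 1) * norm (transpose G *v w)" by (intro mult_right_mono) auto
  finally have "(norm w)^2 \<le> ((norm Bg + 1) * norm (transpose G *v w))^2" by (rule power_mono) simp
  then have "(norm w)^2 / (norm Bg + 1)^2 \<le> (norm (transpose G *v w))^2"
    by (simp add: power_mult_distrib divide_le_eq add_pos_nonneg mult.commute)
  then show ?thesis by (simp add: Gam_quad gam_def)
qed

lemma Gam_sym: "transpose Gam = Gam"
  by (simp add: Gam_def matrix_transpose_mul)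

lemma sub_dist_le: "sub_dist pos j w 0 \<le> norm w"
proof -
  have "(\<Sum>k'\<in>{k'. pos k' \<le> j}. (w $ k' - 0 $ k')\<^sup>2) = (\<Sum>k'\<in>{k'. pos k' \<le> j}. (w $ k')\<^sup>2)" by simp
  also have "\<dots> \<le> (\<Sum>k'\<in>UNIV. (w $ k')\<^sup>2)"
    by (rule sum_mono2) auto
  finally have "(\<Sum>k'\<in>{k'. pos k' \<le> j}. (w $ k' - 0 $ k')\<^sup>2) \<le> (\<Sum>k'\<in>UNIV. (w $ k')\<^sup>2)" .
  then show ?thesis unfolding sub_dist_def norm_vec_def L2_set_def by (simp add: real_sqrt_le_iff)
qed

lemma Amat_apply:
  assumes "v \<in> U"
  shows "matrix (frechet_derivative (\<lambda>\<xi>. f \<xi> v) (at x)) *v w = Ab *v w + D1 (x, v) (w, 0)"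
  unfolding Ab_def by (rule f_frechet[OF f_form fb_C2 assms])

lemma phi_comp: "v \<in> U \<Longrightarrow> \<bar>D1 (x, v) (w, 0) $ k\<bar> \<le> Lp * sub_dist pos (pos k) w 0"
  by (rule fbx_comp_bound[OF fb_C2 _ lip])

lemma phi_norm: "v \<in> U \<Longrightarrow> norm (D1 (x, v) (w, 0)) \<le> sqrt NN * Lp * norm w"
proof -
  assume v: "v \<in> U"
  have "(norm (D1 (x, v) (w, 0)))^2 = (\<Sum>k\<in>UNIV. (D1 (x, v) (w, 0) $ k)^2)" by (rule norm_vec_sq)
  also have "\<dots> \<le> (\<Sum>k\<in>(UNIV::'n set). (Lp * norm w)^2)"
  proof (rule sum_mono)
    fix k
    have "\<bar>D1 (x, v) (w, 0) $ k\<bar> \<le> Lp * norm w"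
      using phi_comp[OF v, of x w k] sub_dist_le[of "pos k" w] Lp0 by (smt (verit) mult_left_mono)
    then show "(D1 (x, v) (w, 0) $ k)^2 \<le> (Lp * norm w)^2" by (metis abs_le_square_iff abs_of_nonneg power2_abs Lp0 norm_ge_zero mult_nonneg_nonneg abs_ge_zero order_trans)
  qed
  also have "\<dots> = (sqrt NN * Lp * norm w)^2" by (simp add: NN_def power_mult_distrib)
  finally show ?thesis by (rule power2_le_imp_le) (simp add: NN_def Lp0)
qed

lemma Amat_norm:
  assumes "v \<in> U"
  shows "norm (matrix (frechet_derivative (\<lambda>\<xi>. f \<xi> v) (at x)) *v w) \<le> alpha * norm w"
proof -
  have "norm (Ab *v w + D1 (x, v) (w, 0)) \<le> norm Ab * norm w + sqrt NN * Lp * norm w"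
    using norm_mv[of Ab w] phi_norm[OF assms, of x w] norm_triangle_ineq by (smt (verit))
  then show ?thesis by (simp add: Amat_apply[OF assms] alpha_def algebra_simps)
qed

lemma alpha0: "0 \<le> alpha" by (simp add: alpha_def NN_def Lp0)

lemma p0: "p0 > 0" "\<And>w. p0 * (norm w)^2 \<le> w \<bullet> (P0 *v w)"
proof -
  have "\<exists>p. p > 0 \<and> (\<forall>w. p * (norm w)^2 \<le> w \<bullet> (P0 *v w))"
    using pd_uniform[of P0] P0_pd unfolding pos_def_mat_def by blast
  then have "p0 > 0 \<and> (\<forall>w. p0 * (norm w)^2 \<le> w \<bullet> (P0 *v w))" unfolding p0_def by (rule someI_ex)
  then show "p0 > 0" "\<And>w. p0 * (norm w)^2 \<le> w \<bullet> (P0 *v w)" by auto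
qed

lemma dl: "0 < dl" "dl \<le> p0/2" "dl \<le> 1" "dl * (2*alpha+beta) < gam / 2"
proof -
  have b0: "0 \<le> beta" by (simp add: beta_def)
  show "0 < dl" using p0 gam_pos alpha0 b0 by (simp add: dl_def)
  show "dl \<le> p0/2" unfolding dl_def by (rule min.cobounded1)
  show "dl \<le> 1" unfolding dl_def by (rule min.coboundedI2[OF min.cobounded1])
  have "dl \<le> gam / (2*(2*alpha+beta)+1)" by (simp add: dl_def)
  then have "dl * (2*alpha+beta) \<le> gam / (2*(2*alpha+beta)+1) * (2*alpha+beta)"
    using alpha0 b0 by (intro mult_right_mono) auto
  also have "\<dots> < gam / 2"
    using gam_pos alpha0 b0 by (simp add: field_simps)
  finally show "dl * (2*alpha+beta) < gam / 2" .
qed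

lemma RR: "RR = 7 + 3 * Lp^2 * real CARD('n)" by (simp add: RR_def NN_def)

lemma SS_sym: "transpose SS = SS" by (simp add: SS_def Smat_sym)

lemma SS_pd: "(norm v)^2/4 \<le> v \<bullet> (SS *v v)"
  unfolding SS_def by (rule cert(1)[OF coords Lp0 RR TT_def])

lemma SS_lyap: "(\<And>k. \<bar>phi$k\<bar> \<le> Lp * sub_dist pos (pos k) v 0) \<Longrightarrow>
    v \<bullet> (SS *v (Ab *v v + phi)) \<le> K0 * (norm (Cb *v v))^2 - (norm v)^2/2"
  unfolding SS_def K0_def Ab_def Cb_def by (rule cert(2)[OF coords Lp0 RR TT_def])

lemma K0: "0 \<le> K0" unfolding K0_def using cc_ge1[of RR TT 0] by (simp add: RR Lp0)

lemma em: "0 < em" "2 * em * K0 < 1" "em * (norm Gam * (norm SS)^2) < 1" "em * (norm SS + 1) * (norm P0 + 1)^2 < p0"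
proof -
  define den where "den = 2*K0 + norm Gam * (norm SS)^2 + 1 + (norm P0 + 1)^2 * (norm SS + 1) / p0"
  have t: "0 \<le> (norm P0 + 1)^2 * (norm SS + 1) / p0" using p0 by simp
  have g: "0 \<le> norm Gam * (norm SS)^2" by simp
  have den1: "den > 0" "2*K0 < den" "norm Gam * (norm SS)^2 < den" "(norm P0 + 1)^2 * (norm SS + 1) / p0 < den"
    using K0 t g unfolding den_def by linarith+
  have e: "em = 1 / den" by (simp add: em_def den_def)
  show "0 < em" using den1 e by simp
  have ep: "0 < em" using den1 e by simp
  have de: "den * em = 1" using den1 e by simp
  have "(2*K0) * em < den * em" by (rule mult_strict_right_mono[OF den1(2) ep])
  then show "2 * em * K0 < 1" using de by (simp add: mult_ac)
  have "(norm Gam * (norm SS)^2) * em < den * em" by (rule mult_strict_right_mono[OF den1(3) ep])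
  then show "em * (norm Gam * (norm SS)^2) < 1" using de by (simp add: mult_ac)
  have "((norm P0 + 1)^2 * (norm SS + 1) / p0) * em < den * em" by (rule mult_strict_right_mono[OF den1(4) ep])
  then have "((norm P0 + 1)^2 * (norm SS + 1) / p0) * em < 1" using de by simp
  then show "em * (norm SS + 1) * (norm P0 + 1)^2 < p0" using p0(1) by (simp add: field_simps)
qed

lemma MM_sym: "transpose MM = MM" by (simp add: MM_def transpose_scalar SS_sym)

lemma mm_pos: "0 < mm" using em by (simp add: mm_def)

lemma MM_lower: "mm * (norm v)^2 \<le> v \<bullet> (MM *v v)"
  using SS_pd[of v] em(1) by (simp add: MM_def mm_def scaleR_matrix_vector_assoc[symmetric] mult_left_mono)

lemma L3: "0 < L3" "3 * Lp \<le> L3" using Lp0 by (auto simp: L3_def)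
lemma rho_pos: "0 < rho" using gam_pos mm_pos L3 by (simp add: rho_def)
lemma cr_pos: "0 < cr" using gam_pos mm_pos by (simp add: cr_def)
lemma eps_pos: "0 < eps" using dl mm_pos rho_pos by (simp add: eps_def)

end


lemma transpose_add: "transpose (X + Y) = transpose X + transpose (Y::real^'n^'m)"
  by (simp add: transpose_def vec_eq_iff)
lemma transpose_diff: "transpose (X - Y) = transpose X - transpose (Y::real^'n^'m)"
  by (simp add: transpose_def vec_eq_iff)

lemma norm4: "norm (a + b - c - d) \<le> norm a + norm b + norm c + norm (d::'a::real_normed_vector)"
proof -
  have "norm (a + b - c - d) \<le> norm (a + b - c) + norm d" by (rule norm_triangle_ineq4)
  also have "norm (a + b - c) \<le> norm (a + b) + norm c" by (rule norm_triangle_ineq4)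
  also have "norm (a + b) \<le> norm a + norm b" by (rule norm_triangle_ineq)
  finally show ?thesis by simp
qed

lemma norm_mm3: "norm ((X::real^'n^'m) ** (Y::real^'p^'n) ** (Z::real^'q^'p)) \<le> norm X * norm Y * norm Z"
proof -
  have "norm (X ** Y ** Z) \<le> norm (X ** Y) * norm Z" by (rule norm_mm)
  also have "\<dots> \<le> (norm X * norm Y) * norm Z" by (intro mult_right_mono norm_mm) simp
  finally show ?thesis .
qed

locale ekf_traj = ekf_sys l blk pos U u fb hb f h D1 D2 L G P0
  for l :: "'p::{finite,linorder} \<Rightarrow> nat"
    and blk :: "'n::finite \<Rightarrow> 'p" and pos :: "'n \<Rightarrow> nat"
    and U :: "(real^'m::finite) set" and u :: "real \<Rightarrow> real^'m"
    and fb :: "real^'n \<Rightarrow> real^'m \<Rightarrow> real^'n" and hb :: "real^'m \<Rightarrow> (real, 'p) vec"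
    and f :: "real^'n \<Rightarrow> real^'m \<Rightarrow> real^'n" and h :: "real^'n \<Rightarrow> real^'m \<Rightarrow> (real, 'p) vec"
    and D1 :: "(real^'n) \<times> (real^'m) \<Rightarrow> ((real^'n) \<times> (real^'m)) \<Rightarrow>\<^sub>L (real^'n)"
    and D2 :: "(real^'n) \<times> (real^'m) \<Rightarrow> ((real^'n) \<times> (real^'m)) \<Rightarrow>\<^sub>L ((real^'n) \<times> (real^'m)) \<Rightarrow>\<^sub>L (real^'n)"
    and L :: real and G P0 :: "real^'n^'n" +
  fixes x :: "real \<Rightarrow> real^'n" and y :: "real \<Rightarrow> (real, 'p) vec" and xh :: "real \<Rightarrow> real^'n"
    and P :: "real \<Rightarrow> real^'n^'n"
  assumes hx: "\<forall>t\<ge>0. (x has_vector_derivative f (x t) (u t)) (at t within {0..})"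
    and hy: "\<forall>t\<ge>0. y t = h (x t) (u t)"
    and hxh: "\<forall>t\<ge>0. (xh has_vector_derivative
                       (f (xh t) (u t) + (P t ** transpose (matrix (frechet_derivative (\<lambda>\<xi>. h \<xi> (u t)) (at (xh t)))))
                                          *v (y t - h (xh t) (u t))))
                     (at t within {0..})"
    and hP: "\<forall>t\<ge>0. (P has_vector_derivative
                       (let A = matrix (frechet_derivative (\<lambda>\<xi>. f \<xi> (u t)) (at (xh t)));
                            C = matrix (frechet_derivative (\<lambda>\<xi>. h \<xi> (u t)) (at (xh t)))
                        in A ** P t + P t ** transpose A + G ** transpose G
                           - P t ** transpose C ** C ** P t))
                     (at t within {0..})"
    and P00: "P 0 = P0" and e0: "norm (x 0 - xh 0) < eps"
begin

definition "Am t = matrix (frechet_derivative (\<lambda>\<xi>. f \<xi> (u t)) (at (xh t)))"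
definition "Pd t = Am t ** P t + P t ** transpose (Am t) + Gam - P t ** transpose Cb ** Cb ** P t"

lemma Cmat: "matrix (frechet_derivative (\<lambda>\<xi>. h \<xi> v) (at z)) = Cb"
  unfolding Cb_def by (rule h_frechet[OF h_form])

lemma dP: "0 \<le> t \<Longrightarrow> (P has_vector_derivative Pd t) (at t within {0..})"
  using hP by (simp add: Let_def Cmat Pd_def Am_def Gam_def)

lemma Am_apply: "0 \<le> t \<Longrightarrow> Am t *v w = Ab *v w + D1 (xh t, u t) (w, 0)"
  unfolding Am_def by (rule Amat_apply[OF u_in_U])

lemma Am_mv: "0 \<le> t \<Longrightarrow> norm (Am t *v w) \<le> alpha * norm w"
  unfolding Am_def by (rule Amat_norm[OF u_in_U])

lemma Am_quad: "0 \<le> t \<Longrightarrow> \<bar>w \<bullet> (Am t *v w)\<bar> \<le> alpha * (norm w)^2"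
proof -
  assume t: "0 \<le> t"
  have "\<bar>w \<bullet> (Am t *v w)\<bar> \<le> norm w * norm (Am t *v w)" by (rule Cauchy_Schwarz_ineq2)
  also have "\<dots> \<le> norm w * (alpha * norm w)" by (intro mult_left_mono Am_mv[OF t]) simp
  finally show ?thesis by (simp add: power2_eq_square mult_ac)
qed

lemma Am_norm: "0 \<le> t \<Longrightarrow> norm (Am t) \<le> sqrt NN * alpha"
  unfolding NN_def by (rule mat_norm_bound[OF Am_mv])

lemma contP: "continuous_on {0..} P"
proof -
  have "continuous (at s within {0..}) P" if "s \<in> {0..}" for s
    using dP[of s] that by (auto intro: has_vector_derivative_continuous)
  then show ?thesis by (simp add: continuous_on_eq_continuous_within)
qed

lemma P_sym: "0 \<le> t1 \<Longrightarrow> transpose (P t1) = P t1"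
proof -
  assume t1: "0 \<le> t1"
  define D where "D s = P s - transpose (P s)" for s
  define Dd where "Dd s = Pd s - transpose (Pd s)" for s
  define phi where "phi s = D s \<bullet> D s" for s
  define phi' where "phi' s = 2 * (D s \<bullet> Dd s)" for s
  have dD: "(D has_vector_derivative Dd s) (at s within {0..})" if "0 \<le> s" for s
    unfolding D_def[abs_def] Dd_def
    by (intro has_vector_derivative_diff dP[OF that] bounded_linear.has_vector_derivative[OF bl_transpose])
  have dphi: "(phi has_real_derivative phi' s) (at s within {0..})" if "0 \<le> s" for s
  proof -
    have "((\<lambda>s. D s \<bullet> D s) has_vector_derivative (D s \<bullet> Dd s + Dd s \<bullet> D s)) (at s within {0..})"
      by (rule bounded_bilinear.has_vector_derivative[OF bounded_bilinear_inner dD[OF that] dD[OF that]])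
    then show ?thesis unfolding has_real_derivative_iff_has_vector_derivative phi_def[abs_def] phi'_def
      by (simp add: inner_commute)
  qed
  obtain Pm where Pm: "\<And>s. s \<in> {0..t1} \<Longrightarrow> norm (P s) \<le> Pm"
  proof -
    have "compact (P ` {0..t1})"
      by (rule compact_continuous_image[OF continuous_on_subset[OF contP]]) auto
    then obtain b where "\<forall>z\<in>P ` {0..t1}. norm z \<le> b" using compact_imp_bounded bounded_pos by metis
    then show ?thesis using that[of b] by auto
  qed
  define CC where "CC = transpose Cb ** Cb"
  define K where "K = 4 * (sqrt NN * alpha + norm CC * Pm)"
  have Dd_eq: "Dd s = Am s ** D s + D s ** transpose (Am s) - D s ** (CC ** P s) - transpose (P s) ** CC ** D s" for s
  proof -
    have tP: "transpose (Pd s) = transpose (P s) ** transpose (Am s) + Am s ** transpose (P s) + Gam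
        - transpose (P s) ** CC ** transpose (P s)"
      unfolding Pd_def CC_def
      by (simp add: transpose_add transpose_diff matrix_transpose_mul Gam_sym matrix_mul_assoc)
    show ?thesis unfolding Dd_def tP unfolding Pd_def D_def CC_def
      by (simp add: mm_diff_left mm_diff_right matrix_mul_assoc algebra_simps)
  qed
  have Ddb: "norm (Dd s) \<le> (K/2) * norm (D s)" if s: "0 \<le> s" "s \<le> t1" for s
  proof -
    have a: "norm (Am s) \<le> sqrt NN * alpha" by (rule Am_norm) (use s in simp)
    have p: "norm (P s) \<le> Pm" using Pm s by simp
    have "norm (Dd s) \<le> norm (Am s ** D s) + norm (D s ** transpose (Am s)) + norm (D s ** (CC ** P s))
        + norm (transpose (P s) ** CC ** D s)"
      unfolding Dd_eq by (rule norm4)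
    also have "\<dots> \<le> norm (Am s) * norm (D s) + norm (D s) * norm (Am s) + norm (D s) * norm CC * norm (P s)
        + norm (P s) * norm CC * norm (D s)"
    proof -
      have "norm (D s ** (CC ** P s)) \<le> norm (D s) * norm CC * norm (P s)"
        unfolding matrix_mul_assoc by (rule norm_mm3)
      moreover have "norm (transpose (P s) ** CC ** D s) \<le> (norm (P s) * norm CC) * norm (D s)"
        using norm_mm3[of "transpose (P s)" CC "D s"] by (simp add: norm_transpose)
      moreover have "norm (D s ** transpose (Am s)) \<le> norm (D s) * norm (Am s)"
        using norm_mm[of "D s" "transpose (Am s)"] by (simp only: norm_transpose)
      ultimately show ?thesis using norm_mm[of "Am s" "D s"] by linarith
    qed
    also have "\<dots> = (2 * norm (Am s) + 2 * norm CC * norm (P s)) * norm (D s)" by (simp add: algebra_simps)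
    also have "\<dots> \<le> (2 * (sqrt NN * alpha) + 2 * norm CC * Pm) * norm (D s)"
      using a p by (intro mult_right_mono add_mono mult_left_mono) auto
    also have "\<dots> = (K/2) * norm (D s)" by (simp add: K_def algebra_simps)
    finally show ?thesis .
  qed
  have "phi t1 = 0"
  proof (rule gronwall0[OF dphi])
    show "phi 0 = 0" using P0_pd P00 by (simp add: phi_def D_def pos_def_mat_def)
    show "0 \<le> phi s" for s by (simp add: phi_def)
    show "phi' s \<le> K * phi s" if "0 \<le> s" "s \<le> t1" for s
    proof -
      have "phi' s \<le> 2 * (norm (D s) * norm (Dd s))" unfolding phi'_def using norm_cauchy_schwarz by simp
      also have "\<dots> \<le> 2 * (norm (D s) * ((K/2) * norm (D s)))"
        using Ddb[OF that] by (intro mult_left_mono) auto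
      also have "\<dots> = K * phi s" by (simp add: phi_def power2_norm_eq_inner[symmetric] power2_eq_square)
      finally show ?thesis .
    qed
  qed (use t1 in auto)
  then have "D t1 = 0" by (simp add: phi_def)
  then show ?thesis by (simp add: D_def)
qed

end


lemma mv_assoc: "(X ** Y) *v v = X *v (Y *v (v::real^'n))" by (simp add: matrix_vector_mul_assoc)
lemma smat_mv: "((k::real) *\<^sub>R X) *v v = k *\<^sub>R (X *v (v::real^'n))" by (simp add: scaleR_matrix_vector_assoc)
lemma mat1_mv: "(k *\<^sub>R mat 1) *v v = k *\<^sub>R (v::real^'n)" by (simp add: smat_mv)

context ekf_traj begin

lemma Cb_bound: "(norm (Cb *v v))^2 \<le> beta * (norm v)^2"
proof -
  have "norm (Cb *v v) \<le> norm Cb * norm v" by (rule norm_mv)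
  then have "(norm (Cb *v v))^2 \<le> (norm Cb * norm v)^2" by (rule power_mono) simp
  then show ?thesis by (simp add: beta_def power_mult_distrib)
qed

lemma Pd_apply: "Pd t *v v = Am t *v (P t *v v) + P t *v (transpose (Am t) *v v) + Gam *v v
    - P t *v (transpose Cb *v (Cb *v (P t *v v)))"
  by (simp add: Pd_def mv_assoc matrix_vector_mult_add_rdistrib matrix_vector_mult_diff_rdistrib)

lemma P_inner: "0 \<le> t \<Longrightarrow> v \<bullet> (P t *v z) = (P t *v v) \<bullet> z"
  by (rule inner_mv_sym[OF P_sym])

lemma Pd_quad:
  assumes t: "0 \<le> t" and Pz: "P t *v z = v"
  shows "z \<bullet> (Pd t *v z) = 2 * (z \<bullet> (Am t *v v)) + z \<bullet> (Gam *v z) - (norm (Cb *v v))^2"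
proof -
  have a: "z \<bullet> (P t *v (transpose (Am t) *v z)) = z \<bullet> (Am t *v v)"
    using P_inner[OF t, of z] Pz inner_mv_transpose[of v "transpose (Am t)" z] by (simp add: inner_commute)
  have b: "z \<bullet> (P t *v (transpose Cb *v (Cb *v v))) = (norm (Cb *v v))^2"
    using P_inner[OF t, of z] Pz inner_mv_transpose[of v "transpose Cb"] by (simp add: power2_norm_eq_inner)
  show ?thesis unfolding Pd_apply Pz using a b by (simp add: inner_add_right inner_diff_right)
qed

lemma P_lower: "0 \<le> t \<Longrightarrow> dl * (norm w)^2 \<le> w \<bullet> (P t *v w)"
proof -
  assume t: "0 \<le> t"
  define R where "R s = P s - dl *\<^sub>R mat 1" for s
  have "0 \<le> w \<bullet> (R t *v w)"
  proof (rule touching[where R'=Pd, OF _ _ _ _ t])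
    show "(R has_vector_derivative Pd s) (at s within {0..})" if "0 \<le> s" for s
      using has_vector_derivative_diff[OF dP[OF that] has_vector_derivative_const[of "dl *\<^sub>R mat 1"]]
      by (simp add: R_def[abs_def])
    show "transpose (R s) = R s" if "0 \<le> s" for s
      using P_sym[OF that] by (simp add: R_def transpose_diff transpose_scalar)
    show "0 < v \<bullet> (R 0 *v v)" if "v \<noteq> 0" for v
    proof -
      have "v \<bullet> (R 0 *v v) = v \<bullet> (P0 *v v) - dl * (norm v)^2"
        by (simp add: R_def P00 matrix_vector_mult_diff_rdistrib mat1_mv inner_diff_right power2_norm_eq_inner)
      moreover have "p0 * (norm v)^2 \<le> v \<bullet> (P0 *v v)" by (rule p0(2))
      moreover have "dl * (norm v)^2 < p0 * (norm v)^2" using that dl p0(1) by simp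
      ultimately show ?thesis by linarith
    qed
    show "0 < v \<bullet> (Pd s *v v)" if s: "0 \<le> s" and v: "v \<noteq> 0" and "R s *v v = 0" for s v
    proof -
      have Pv: "P s *v v = dl *\<^sub>R v" using \<open>R s *v v = 0\<close> by (simp add: R_def matrix_vector_mult_diff_rdistrib mat1_mv)
      have "v \<bullet> (Pd s *v v) = v \<bullet> (Am s *v (dl *\<^sub>R v)) + v \<bullet> (P s *v (transpose (Am s) *v v)) + v \<bullet> (Gam *v v)
          - v \<bullet> (P s *v (transpose Cb *v (Cb *v (dl *\<^sub>R v))))"
        unfolding Pd_apply Pv by (simp add: inner_add_right inner_diff_right)
      also have "v \<bullet> (P s *v (transpose (Am s) *v v)) = dl * (v \<bullet> (Am s *v v))"
        using P_inner[OF s, of v] Pv inner_mv_transpose[of v "transpose (Am s)" v] by (simp add: inner_commute)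
      also have "v \<bullet> (P s *v (transpose Cb *v (Cb *v (dl *\<^sub>R v)))) = dl * dl * (norm (Cb *v v))^2"
        using P_inner[OF s, of v] Pv inner_mv_transpose[of "dl *\<^sub>R v" "transpose Cb"]
        by (simp add: power2_norm_eq_inner matrix_vector_mult_scaleR)
      finally have e: "v \<bullet> (Pd s *v v) = 2 * dl * (v \<bullet> (Am s *v v)) + v \<bullet> (Gam *v v) - dl * dl * (norm (Cb *v v))^2"
        by (simp add: matrix_vector_mult_scaleR)
      have n: "(norm v)^2 > 0" using v by simp
      have A1: "- (alpha * (norm v)^2) \<le> v \<bullet> (Am s *v v)" using Am_quad[OF s, of v] by linarith
      have A2: "2 * dl * (- (alpha * (norm v)^2)) \<le> 2 * dl * (v \<bullet> (Am s *v v))"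
        using A1 dl(1) by (intro mult_left_mono) auto
      have C1: "dl * dl * (norm (Cb *v v))^2 \<le> dl * dl * (beta * (norm v)^2)"
        using Cb_bound[of v] dl(1) by (intro mult_left_mono) auto
      have C2: "dl * dl * (beta * (norm v)^2) \<le> dl * (beta * (norm v)^2)"
        using dl(1,3) by (intro mult_right_mono) (auto simp: beta_def)
      have G1: "gam * (norm v)^2 \<le> v \<bullet> (Gam *v v)" by (rule Gam_lower)
      have "dl * (2*alpha+beta) * (norm v)^2 < gam / 2 * (norm v)^2" by (rule mult_strict_right_mono[OF dl(4) n])
      moreover have "2 * dl * (alpha * (norm v)^2) + dl * (beta * (norm v)^2) = dl * (2*alpha+beta) * (norm v)^2"
        by (simp add: algebra_simps)
      moreover have "0 < gam / 2 * (norm v)^2" using gam_pos n by simp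
      moreover have "gam * (norm v)^2 = gam / 2 * (norm v)^2 + gam / 2 * (norm v)^2" by simp
      ultimately have "0 < gam * (norm v)^2 - 2 * dl * (alpha * (norm v)^2) - dl * (beta * (norm v)^2)"
        by linarith
      then show ?thesis unfolding e using A2 C1 C2 G1 by linarith
    qed
  qed
  then show ?thesis by (simp add: R_def matrix_vector_mult_diff_rdistrib mat1_mv inner_diff_right power2_norm_eq_inner)
qed

end


lemma mv_minus: "(- X) *v v = - ((X::real^'n^'m) *v v)"
  by (rule bounded_bilinear.minus_left[OF bb_mv])

context ekf_traj begin

definition "Q t = matrix_inv (P t)"
definition "Qd t = - (Q t ** Pd t ** Q t)"

lemma P_ker: "0 \<le> t \<Longrightarrow> P t *v w = 0 \<Longrightarrow> w = 0"
proof -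
  assume t: "0 \<le> t" and z: "P t *v w = 0"
  have "dl * (norm w)^2 \<le> 0" using P_lower[OF t, of w] z by simp
  then show "w = 0" using dl(1) by (simp add: mult_le_0_iff)
qed

lemma Q_inv: "0 \<le> t \<Longrightarrow> Q t ** P t = mat 1 \<and> P t ** Q t = mat 1"
proof -
  assume t: "0 \<le> t"
  have "\<exists>B. B ** P t = mat 1" using P_ker[OF t] by (simp add: matrix_left_invertible_ker)
  then have "invertible (P t)" by (simp add: invertible_left_inverse)
  then have "\<exists>A'. P t ** A' = mat 1 \<and> A' ** P t = mat 1" by (simp add: invertible_def)
  then have "P t ** Q t = mat 1 \<and> Q t ** P t = mat 1" unfolding Q_def matrix_inv_def by (rule someI_ex)
  then show ?thesis by simp
qed

lemma PQ_mv: "0 \<le> t \<Longrightarrow> P t *v (Q t *v w) = w"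
  using Q_inv by (simp add: matrix_vector_mul_assoc)

lemma Q_sym: "0 \<le> t \<Longrightarrow> transpose (Q t) = Q t"
proof -
  assume t: "0 \<le> t"
  have "transpose (Q t) ** P t = mat 1"
    using Q_inv[OF t] P_sym[OF t] by (metis matrix_transpose_mul transpose_mat)
  then have "transpose (Q t) = transpose (Q t) ** (P t ** Q t)" using Q_inv[OF t] by simp
  also have "\<dots> = Q t" using \<open>transpose (Q t) ** P t = mat 1\<close> by (simp add: matrix_mul_assoc)
  finally show ?thesis .
qed

lemma Q_inner: "0 \<le> t \<Longrightarrow> v \<bullet> (Q t *v z) = (Q t *v v) \<bullet> z"
  by (rule inner_mv_sym[OF Q_sym])

lemma Q_mv: "0 \<le> t \<Longrightarrow> norm (Q t *v w) \<le> (1/dl) * norm w"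
proof -
  assume t: "0 \<le> t"
  define z where "z = Q t *v w"
  have Pz: "P t *v z = w" by (simp add: z_def PQ_mv[OF t])
  have "dl * (norm z)^2 \<le> z \<bullet> (P t *v z)" by (rule P_lower[OF t])
  also have "\<dots> \<le> norm z * norm w" unfolding Pz by (rule norm_cauchy_schwarz)
  finally have "dl * (norm z)^2 \<le> norm z * norm w" .
  then have "dl * norm z \<le> norm w"
    by (cases "z = 0") (auto simp: power2_eq_square mult.assoc)
  then show ?thesis using dl(1) by (simp add: z_def field_simps)
qed

lemma Q_quad_upper: "0 \<le> t \<Longrightarrow> w \<bullet> (Q t *v w) \<le> (norm w)^2 / dl"
proof -
  assume t: "0 \<le> t"
  have "w \<bullet> (Q t *v w) \<le> norm w * norm (Q t *v w)" by (rule norm_cauchy_schwarz)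
  also have "\<dots> \<le> norm w * ((1/dl) * norm w)" by (intro mult_left_mono Q_mv[OF t]) simp
  finally show ?thesis by (simp add: power2_eq_square)
qed

lemma Q_norm: "0 \<le> t \<Longrightarrow> norm (Q t) \<le> sqrt (CARD('n)) * (1/dl)"
  by (rule mat_norm_bound[OF Q_mv])

lemma dQ: "0 \<le> t \<Longrightarrow> (Q has_vector_derivative Qd t) (at t within {0..})"
  unfolding Qd_def by (rule inv_deriv[OF dP]) (use Q_inv Q_norm in auto)

lemma Q_lower: "0 \<le> t \<Longrightarrow> w \<bullet> (MM *v w) \<le> w \<bullet> (Q t *v w)"
proof -
  assume t: "0 \<le> t"
  define R where "R s = Q s - MM" for s
  have "0 \<le> w \<bullet> (R t *v w)"
  proof (rule touching[where R'=Qd, OF _ _ _ _ t])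
    show "(R has_vector_derivative Qd s) (at s within {0..})" if "0 \<le> s" for s
      using has_vector_derivative_diff[OF dQ[OF that] has_vector_derivative_const[of MM]]
      by (simp add: R_def[abs_def])
    show "transpose (R s) = R s" if "0 \<le> s" for s
      using Q_sym[OF that] MM_sym by (simp add: R_def transpose_diff)
    show "0 < v \<bullet> (R 0 *v v)" if v: "v \<noteq> 0" for v
    proof -
      define z where "z = Q 0 *v v"
      have Pz: "P0 *v z = v" using PQ_mv[of 0 v] by (simp add: z_def P00)
      have "p0 * (norm z)^2 \<le> z \<bullet> (P0 *v z)" by (rule p0(2))
      also have "z \<bullet> (P0 *v z) = v \<bullet> (Q 0 *v v)" using Pz by (simp add: z_def inner_commute)
      finally have a: "p0 * (norm z)^2 \<le> v \<bullet> (Q 0 *v v)" .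
      have "norm v \<le> norm P0 * norm z" using norm_mv[of P0 z] Pz by simp
      also have "\<dots> \<le> (norm P0 + 1) * norm z" by (intro mult_right_mono) auto
      finally have "(norm v)^2 \<le> ((norm P0 + 1) * norm z)^2" by (rule power_mono) simp
      then have b: "(norm v)^2 \<le> (norm P0 + 1)^2 * (norm z)^2" by (simp add: power_mult_distrib)
      have c: "v \<bullet> (MM *v v) \<le> em * (norm SS + 1) * (norm v)^2"
      proof -
        have "v \<bullet> (MM *v v) = em * (v \<bullet> (SS *v v))" by (simp add: MM_def smat_mv)
        also have "\<dots> \<le> em * (norm SS * (norm v)^2)"
          using quad_bound[of v SS] em(1) by (intro mult_left_mono) auto
        also have "\<dots> \<le> em * (norm SS + 1) * (norm v)^2"
          using em(1) by (simp add: mult_right_mono mult_left_mono algebra_simps)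
        finally show ?thesis .
      qed
      have n: "0 < (norm v)^2" using v by simp
      have "em * (norm SS + 1) * (norm v)^2 * (norm P0 + 1)^2 < p0 * (norm v)^2"
        using em(4) n by (simp add: mult.commute mult.left_commute mult_strict_left_mono)
      also have "p0 * (norm v)^2 \<le> p0 * ((norm P0 + 1)^2 * (norm z)^2)" using b p0(1) by (intro mult_left_mono) auto
      finally have "em * (norm SS + 1) * (norm v)^2 * (norm P0 + 1)^2 < (p0 * (norm z)^2) * (norm P0 + 1)^2"
        by (simp add: mult_ac)
      then have "em * (norm SS + 1) * (norm v)^2 < p0 * (norm z)^2"
      proof (rule mult_less_cancel_right_pos[THEN iffD1, rotated])
        have "0 < norm P0 + 1" by (simp add: add_nonneg_pos)
        then show "0 < (norm P0 + 1)^2" by simp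
      qed
      then show ?thesis using a c by (simp add: R_def matrix_vector_mult_diff_rdistrib inner_diff_right)
    qed
    show "0 < v \<bullet> (Qd s *v v)" if s: "0 \<le> s" and v: "v \<noteq> 0" and "R s *v v = 0" for s v
    proof -
      define z where "z = Q s *v v"
      have zM: "z = MM *v v" using \<open>R s *v v = 0\<close> by (simp add: R_def z_def matrix_vector_mult_diff_rdistrib)
      have Pz: "P s *v z = v" by (simp add: z_def PQ_mv[OF s])
      have "v \<bullet> (Qd s *v v) = - (v \<bullet> (Q s *v (Pd s *v z)))" by (simp add: Qd_def mv_assoc z_def mv_minus)
      also have "v \<bullet> (Q s *v (Pd s *v z)) = z \<bullet> (Pd s *v z)" using Q_inner[OF s, of v] by (simp add: z_def)
      also have "z \<bullet> (Pd s *v z) = 2 * (z \<bullet> (Am s *v v)) + z \<bullet> (Gam *v z) - (norm (Cb *v v))^2"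
        by (rule Pd_quad[OF s Pz])
      finally have e: "v \<bullet> (Qd s *v v) = (norm (Cb *v v))^2 - 2 * (z \<bullet> (Am s *v v)) - z \<bullet> (Gam *v z)" by simp
      have zA: "z \<bullet> (Am s *v v) = em * (v \<bullet> (SS *v (Ab *v v + D1 (xh s, u s) (v, 0))))"
        using inner_mv_sym[OF SS_sym, of v "Am s *v v"] by (simp add: zM Am_apply[OF s] MM_def smat_mv)
      have ly: "v \<bullet> (SS *v (Ab *v v + D1 (xh s, u s) (v, 0))) \<le> K0 * (norm (Cb *v v))^2 - (norm v)^2/2"
        by (rule SS_lyap) (rule phi_comp[OF u_in_U[OF s]])
      have zA2: "2 * (z \<bullet> (Am s *v v)) \<le> 2 * em * K0 * (norm (Cb *v v))^2 - em * (norm v)^2"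
        using mult_left_mono[OF ly, of em] em(1) unfolding zA by (simp add: algebra_simps)
      have zn: "norm z \<le> em * (norm SS * norm v)"
        using norm_mv[of SS v] em(1) by (simp add: zM MM_def smat_mv mult_left_mono)
      have zG: "z \<bullet> (Gam *v z) \<le> norm Gam * (em * (norm SS * norm v))^2"
      proof -
        have "z \<bullet> (Gam *v z) \<le> norm Gam * (norm z)^2" using quad_bound[of z Gam] by simp
        also have "\<dots> \<le> norm Gam * (em * (norm SS * norm v))^2"
          using zn by (intro mult_left_mono power_mono) auto
        finally show ?thesis .
      qed
      have n: "0 < (norm v)^2" using v by simp
      have "norm Gam * (em * (norm SS * norm v))^2 = em * (em * (norm Gam * (norm SS)^2)) * (norm v)^2"
        by (simp add: power_mult_distrib power2_eq_square algebra_simps)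
      also have "\<dots> < em * 1 * (norm v)^2"
        using em(1,3) n by (intro mult_strict_right_mono mult_strict_left_mono) auto
      finally have zG2: "z \<bullet> (Gam *v z) < em * (norm v)^2" using zG by simp
      have "0 \<le> (1 - 2 * em * K0) * (norm (Cb *v v))^2" using em(2) by simp
      then show ?thesis unfolding e using zA2 zG2 by (simp add: algebra_simps)
    qed
  qed
  then show ?thesis by (simp add: R_def matrix_vector_mult_diff_rdistrib inner_diff_right)
qed

lemma Q_lower_mm: "0 \<le> t \<Longrightarrow> mm * (norm w)^2 \<le> w \<bullet> (Q t *v w)"
  using MM_lower[of w] Q_lower[of t w] by linarith

end


context ekf_traj begin

definition "e t = x t - xh t"
definition "r t = fb (x t) (u t) - fb (xh t) (u t) - D1 (xh t, u t) (e t, 0)"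
definition "ed t = Am t *v e t + r t - P t *v (transpose Cb *v (Cb *v e t))"
definition "V t = e t \<bullet> (Q t *v e t)"
definition "Vd t = e t \<bullet> (Q t *v ed t + Qd t *v e t) + ed t \<bullet> (Q t *v e t)"

lemma r_bound: "0 \<le> t \<Longrightarrow> norm (r t) \<le> L3 * (norm (e t))^2"
proof -
  assume t: "0 \<le> t"
  have "norm (r t) \<le> 3 * Lp * (norm (x t - xh t))^2"
    unfolding r_def e_def by (rule fb_remainder[OF fb_C2 u_in_U[OF t] b2 Lp0])
  also have "\<dots> \<le> L3 * (norm (e t))^2" using L3(2) by (simp add: e_def mult_right_mono)
  finally show ?thesis .
qed

lemma de: "0 \<le> t \<Longrightarrow> (e has_vector_derivative ed t) (at t within {0..})"
proof -
  assume t: "0 \<le> t"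
  have d: "((\<lambda>s. x s - xh s) has_vector_derivative
      (f (x t) (u t) - (f (xh t) (u t) + (P t ** transpose (matrix (frechet_derivative (\<lambda>\<xi>. h \<xi> (u t)) (at (xh t)))))
                                          *v (y t - h (xh t) (u t))))) (at t within {0..})"
    using hx hxh t by (intro has_vector_derivative_diff) auto
  have yh: "y t - h (xh t) (u t) = Cb *v e t"
    using hy t by (simp add: h_form Cb_def e_def matrix_vector_mult_diff_distrib)
  have ab: "Abar blk pos *v x t - Abar blk pos *v xh t = Ab *v e t"
    by (simp add: e_def Ab_def matrix_vector_mult_diff_distrib)
  have ff: "f (x t) (u t) - f (xh t) (u t) = Am t *v e t + r t"
    unfolding f_form Am_apply[OF t] r_def using ab by (simp add: algebra_simps)
  have "f (x t) (u t) - (f (xh t) (u t) + (P t ** transpose (matrix (frechet_derivative (\<lambda>\<xi>. h \<xi> (u t)) (at (xh t)))))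
                                          *v (y t - h (xh t) (u t))) = ed t"
    unfolding Cmat yh ed_def mv_assoc using ff by (simp add: algebra_simps)
  with d show ?thesis by (simp add: e_def[abs_def])
qed

lemma dV: "0 \<le> t \<Longrightarrow> (V has_real_derivative Vd t) (at t within {0..})"
proof -
  assume t: "0 \<le> t"
  have dQe: "((\<lambda>s. Q s *v e s) has_vector_derivative (Q t *v ed t + Qd t *v e t)) (at t within {0..})"
    by (rule bounded_bilinear.has_vector_derivative[OF bb_mv dQ[OF t] de[OF t]])
  have "((\<lambda>s. e s \<bullet> (Q s *v e s)) has_vector_derivative (e t \<bullet> (Q t *v ed t + Qd t *v e t) + ed t \<bullet> (Q t *v e t))) (at t within {0..})"
    by (rule bounded_bilinear.has_vector_derivative[OF bounded_bilinear_inner de[OF t] dQe])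
  then show ?thesis unfolding has_real_derivative_iff_has_vector_derivative V_def[abs_def] Vd_def .
qed

lemma Vd_eq: "0 \<le> t \<Longrightarrow> Vd t = 2 * ((Q t *v e t) \<bullet> r t) - (norm (Cb *v e t))^2 - (Q t *v e t) \<bullet> (Gam *v (Q t *v e t))"
proof -
  assume t: "0 \<le> t"
  define w where "w = Q t *v e t"
  have Pw: "P t *v w = e t" by (simp add: w_def PQ_mv[OF t])
  have a: "ed t \<bullet> (Q t *v e t) = w \<bullet> ed t" by (simp add: w_def inner_commute)
  have b: "e t \<bullet> (Q t *v ed t) = w \<bullet> ed t" by (simp add: w_def Q_inner[OF t])
  have c: "e t \<bullet> (Qd t *v e t) = - (w \<bullet> (Pd t *v w))"
    by (simp add: Qd_def mv_minus mv_assoc w_def Q_inner[OF t])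
  have c2: "w \<bullet> (Pd t *v w) = 2 * (w \<bullet> (Am t *v e t)) + w \<bullet> (Gam *v w) - (norm (Cb *v e t))^2"
    by (rule Pd_quad[OF t Pw])
  have d: "w \<bullet> (P t *v (transpose Cb *v (Cb *v e t))) = (norm (Cb *v e t))^2"
    using P_inner[OF t, of w] Pw inner_mv_transpose[of "e t" "transpose Cb"] by (simp add: power2_norm_eq_inner)
  have "w \<bullet> ed t = w \<bullet> (Am t *v e t) + w \<bullet> r t - (norm (Cb *v e t))^2"
    unfolding ed_def using d by (simp add: inner_add_right inner_diff_right)
  then show ?thesis unfolding Vd_def inner_add_right a b c c2 by (simp add: w_def algebra_simps)
qed

lemma V_lower: "0 \<le> t \<Longrightarrow> mm * (norm (e t))^2 \<le> V t"
  unfolding V_def by (rule Q_lower_mm)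

lemma V_upper: "0 \<le> t \<Longrightarrow> V t \<le> (norm (e t))^2 / dl"
  unfolding V_def by (rule Q_quad_upper)

lemma Vd_decay: "0 \<le> t \<Longrightarrow> V t \<le> mm * rho^2 \<Longrightarrow> Vd t \<le> - cr * V t"
proof -
  assume t: "0 \<le> t" and Vb: "V t \<le> mm * rho^2"
  define w where "w = Q t *v e t"
  define E where "E = norm (e t)"
  define W where "W = norm w"
  have E0: "0 \<le> E" and W0: "0 \<le> W" by (simp_all add: E_def W_def)
  have VEW: "V t \<le> E * W" unfolding V_def E_def W_def w_def by (rule norm_cauchy_schwarz)
  have VE: "mm * E^2 \<le> V t" unfolding E_def by (rule V_lower[OF t])
  have EW: "mm * E \<le> W"
  proof (cases "E = 0")
    case True then show ?thesis using W0 by simp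
  next
    case False
    then have "0 < E" using E0 by simp
    moreover have "mm * E * E \<le> W * E" using VE VEW by (simp add: power2_eq_square mult_ac)
    ultimately show ?thesis by simp
  qed
  have Erho: "E \<le> rho"
  proof -
    have "mm * E^2 \<le> mm * rho^2" using VE Vb by simp
    then have "E^2 \<le> rho^2" using mm_pos by simp
    then show ?thesis using rho_pos E0 by (simp add: abs_le_square_iff[symmetric] power2_le_iff_abs_le)
  qed
  have "Vd t \<le> 2 * (W * (L3 * E^2)) - gam * W^2"
  proof -
    have "(w \<bullet> r t) \<le> W * norm (r t)" unfolding W_def by (rule norm_cauchy_schwarz)
    also have "\<dots> \<le> W * (L3 * E^2)" unfolding E_def by (intro mult_left_mono r_bound[OF t]) (simp add: W_def)
    finally have a: "w \<bullet> r t \<le> W * (L3 * E^2)" .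
    have b: "gam * W^2 \<le> w \<bullet> (Gam *v w)" unfolding W_def by (rule Gam_lower)
    show ?thesis using Vd_eq[OF t] a b unfolding w_def[symmetric] by (smt (verit) zero_le_power2)
  qed
  also have "2 * (W * (L3 * E^2)) \<le> (gam / 2) * W^2"
  proof -
    have "2 * (W * (L3 * E^2)) = 2 * L3 * W * E * E" by (simp add: power2_eq_square mult_ac)
    also have "\<dots> \<le> 2 * L3 * W * rho * E"
      using Erho E0 W0 L3(1) by (intro mult_right_mono mult_left_mono) auto
    also have "\<dots> \<le> 2 * L3 * W * rho * (W / mm)"
      using EW mm_pos W0 L3(1) rho_pos by (intro mult_left_mono) (auto simp: field_simps)
    also have "\<dots> = (gam / 2) * W^2"
      using mm_pos L3(1) by (simp add: rho_def power2_eq_square field_simps)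
    finally show ?thesis .
  qed
  finally have "Vd t \<le> - (gam / 2) * W^2" by simp
  also have "- (gam / 2) * W^2 \<le> - cr * V t"
  proof -
    have "mm * V t \<le> mm * (E * W)" using VEW mm_pos by simp
    also have "\<dots> \<le> W * W" using mult_right_mono[OF EW W0] by (simp add: mult_ac)
    finally have "mm * V t \<le> W^2" by (simp add: power2_eq_square)
    then have "(gam / 2) * (mm * V t) \<le> (gam / 2) * W^2" using gam_pos by simp
    then show ?thesis by (simp add: cr_def mult_ac)
  qed
  finally show ?thesis .
qed

lemma conclusion: "\<exists>M \<alpha>. \<alpha> > 0 \<and> (\<forall>t\<ge>0. norm (x t - xh t) \<le> M * exp (- \<alpha> * t))"
proof -
  define W where "W s = V s * exp (cr * s)" for s
  define W' where "W' s = Vd s * exp (cr * s) + (exp (cr * s) * cr) * V s" for s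
  have dW: "(W has_real_derivative W' s) (at s within {0..})" if "0 \<le> s" for s
  proof -
    have "((\<lambda>s. exp (cr * s)) has_real_derivative exp (cr * s) * cr) (at s within {0..})"
      by (auto intro!: derivative_eq_intros)
    then show ?thesis unfolding W_def[abs_def] W'_def by (rule DERIV_mult[OF dV[OF that]])
  qed
  have V0: "V 0 < mm * rho^2"
  proof -
    have "V 0 \<le> (norm (e 0))^2 / dl" by (rule V_upper) simp
    also have "(norm (e 0))^2 < eps^2" using e0 by (simp add: e_def power_strict_mono)
    then have "(norm (e 0))^2 / dl < eps^2 / dl" using dl(1) by (simp add: divide_strict_right_mono)
    also have "eps^2 / dl = mm * rho^2"
      using dl(1) mm_pos by (simp add: eps_def power_mult_distrib)
    finally show ?thesis .
  qed
  have Wmono: "W t \<le> W 0" if t: "0 \<le> t" for t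
  proof (rule invariance[OF dW, where B="mm * rho^2"])
    show "W 0 < mm * rho^2" using V0 by (simp add: W_def)
    show "W' s \<le> 0" if s: "0 \<le> s" and Ws: "W s \<le> mm * rho^2" for s
    proof -
      have "V s \<le> W s"
      proof -
        have Vnn: "0 \<le> V s" using V_lower[OF s] mm_pos by (smt (verit) mult_nonneg_nonneg zero_le_power2)
        have "1 \<le> exp (cr * s)" using cr_pos s by simp
        then have "V s * 1 \<le> V s * exp (cr * s)" using Vnn by (intro mult_left_mono) auto
        then show ?thesis by (simp add: W_def)
      qed
      then have "Vd s \<le> - cr * V s" using Ws by (intro Vd_decay[OF s]) simp
      then have "(Vd s + cr * V s) * exp (cr * s) \<le> 0" by (simp add: mult_le_0_iff)
      then show ?thesis by (simp add: W'_def algebra_simps)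
    qed
  qed (use t in auto)
  have V0nn: "0 \<le> V 0" using V_lower[of 0] mm_pos by (smt (verit) mult_nonneg_nonneg zero_le_power2 order_refl)
  show ?thesis
  proof (rule exI[of _ "sqrt (V 0 / mm)"], rule exI[of _ "cr / 2"], intro conjI allI impI)
    show "0 < cr / 2" using cr_pos by simp
    fix t :: real assume t: "0 \<le> t"
    have "mm * (norm (e t))^2 \<le> V t" by (rule V_lower[OF t])
    also have "V t \<le> V 0 * exp (- cr * t)"
    proof -
      have "V t * exp (cr * t) \<le> V 0" using Wmono[OF t] by (simp add: W_def)
      then have "V t * exp (cr * t) * exp (- cr * t) \<le> V 0 * exp (- cr * t)" by (simp add: mult_right_mono)
      then show ?thesis by (simp add: mult.assoc exp_add[symmetric])
    qed
    finally have "(norm (e t))^2 \<le> (V 0 / mm) * exp (- cr * t)" using mm_pos by (simp add: field_simps)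
    also have "exp (- cr * t) = (exp (- (cr / 2) * t))^2" by (simp add: power2_eq_square exp_add[symmetric])
    finally have "(norm (e t))^2 \<le> (sqrt (V 0 / mm) * exp (- (cr / 2) * t))^2"
      using V0nn mm_pos by (simp add: power_mult_distrib)
    then have "norm (e t) \<le> sqrt (V 0 / mm) * exp (- (cr / 2) * t)"
      by (rule power2_le_imp_le) (use V0nn mm_pos in simp)
    then show "norm (x t - xh t) \<le> sqrt (V 0 / mm) * exp (- (cr / 2) * t)" by (simp add: e_def)
  qed
qed

end


theorem mainTheorem1:
  fixes l :: "'p::{finite,linorder} \<Rightarrow> nat"
    and blk :: "'n::finite \<Rightarrow> 'p" and pos :: "'n \<Rightarrow> nat"
    and U :: "(real^'m::finite) set" and u :: "real \<Rightarrow> real^'m"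
    and fb :: "real^'n \<Rightarrow> real^'m \<Rightarrow> real^'n" and hb :: "real^'m \<Rightarrow> (real, 'p) vec"
    and f :: "real^'n \<Rightarrow> real^'m \<Rightarrow> real^'n" and h :: "real^'n \<Rightarrow> real^'m \<Rightarrow> (real, 'p) vec"
    and D1 :: "(real^'n) \<times> (real^'m) \<Rightarrow> ((real^'n) \<times> (real^'m)) \<Rightarrow>\<^sub>L (real^'n)"
    and D2 :: "(real^'n) \<times> (real^'m) \<Rightarrow> ((real^'n) \<times> (real^'m)) \<Rightarrow>\<^sub>L ((real^'n) \<times> (real^'m)) \<Rightarrow>\<^sub>L (real^'n)"
    and L :: real and G P0 :: "real^'n^'n"
  assumes coords: "obs_coords l blk pos"
    and f_form: "\<And>x v. f x v = Abar blk pos *v x + fb x v"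
    and h_form: "\<And>x v. h x v = Cbar blk pos *v x + hb v"
    and fb_triangular: "\<And>x \<xi> v k. v \<in> U \<Longrightarrow> (\<forall>k'. pos k' \<le> pos k \<longrightarrow> x $ k' = \<xi> $ k')
                          \<Longrightarrow> fb x v $ k = fb \<xi> v $ k"
    and fb_lipschitz: "\<And>x \<xi> v k. v \<in> U \<Longrightarrow>
                          \<bar>fb x v $ k - fb \<xi> v $ k\<bar> \<le> L * sub_dist pos (pos k) x \<xi>"
    and fb_C2: "has_C2_derivs (UNIV \<times> U) (\<lambda>z. fb (fst z) (snd z)) D1 D2"
    and hb_C2: "C2_on U hb"
    and fb_second_bound: "\<And>x \<xi> v. v \<in> U \<Longrightarrow>
                          norm (D2 (x, v) (\<xi>, 0) (\<xi>, 0)) \<le> L * (norm \<xi>)\<^sup>2"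
    and u_in_U: "\<And>t. t \<ge> 0 \<Longrightarrow> u t \<in> U"
    and G_inv: "invertible G"
    and P0_pd: "pos_def_mat P0"
  shows "\<exists>\<epsilon>>0. \<forall>x y xh P.
           (\<forall>t\<ge>0. (x has_vector_derivative f (x t) (u t)) (at t within {0..})) \<and>
           (\<forall>t\<ge>0. y t = h (x t) (u t)) \<and>
           (\<forall>t\<ge>0. (xh has_vector_derivative
                       (f (xh t) (u t) + (P t ** transpose (matrix (frechet_derivative (\<lambda>\<xi>. h \<xi> (u t)) (at (xh t)))))
                                          *v (y t - h (xh t) (u t))))
                     (at t within {0..})) \<and>
           (\<forall>t\<ge>0. (P has_vector_derivative
                       (let A = matrix (frechet_derivative (\<lambda>\<xi>. f \<xi> (u t)) (at (xh t)));
                            C = matrix (frechet_derivative (\<lambda>\<xi>. h \<xi> (u t)) (at (xh t)))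
                        in A ** P t + P t ** transpose A + G ** transpose G
                           - P t ** transpose C ** C ** P t))
                     (at t within {0..})) \<and>
           P 0 = P0 \<and> norm (x 0 - xh 0) < \<epsilon>
           \<longrightarrow> (\<exists>M \<alpha>. \<alpha> > 0 \<and> (\<forall>t\<ge>0. norm (x t - xh t) \<le> M * exp (- \<alpha> * t)))"
proof -
  interpret ekf_sys l blk pos U u fb hb f h D1 D2 L G P0
    by (unfold_locales) (fact coords f_form h_form fb_lipschitz fb_C2 fb_second_bound u_in_U G_inv P0_pd)+
  show ?thesis
  proof (rule exI[of _ eps], intro conjI allI impI)
    show "0 < eps" by (rule eps_pos)
    fix x y xh P
    assume H: "(\<forall>t\<ge>0. (x has_vector_derivative f (x t) (u t)) (at t within {0..})) \<and>
           (\<forall>t\<ge>0. y t = h (x t) (u t)) \<and>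
           (\<forall>t\<ge>0. (xh has_vector_derivative
                       (f (xh t) (u t) + (P t ** transpose (matrix (frechet_derivative (\<lambda>\<xi>. h \<xi> (u t)) (at (xh t)))))
                                          *v (y t - h (xh t) (u t))))
                     (at t within {0..})) \<and>
           (\<forall>t\<ge>0. (P has_vector_derivative
                       (let A = matrix (frechet_derivative (\<lambda>\<xi>. f \<xi> (u t)) (at (xh t)));
                            C = matrix (frechet_derivative (\<lambda>\<xi>. h \<xi> (u t)) (at (xh t)))
                        in A ** P t + P t ** transpose A + G ** transpose G
                           - P t ** transpose C ** C ** P t))
                     (at t within {0..})) \<and>
           P 0 = P0 \<and> norm (x 0 - xh 0) < eps"
    interpret ekf_traj l blk pos U u fb hb f h D1 D2 L G P0 x y xh P
      using H by unfold_locales auto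
    show "\<exists>M \<alpha>. \<alpha> > 0 \<and> (\<forall>t\<ge>0. norm (x t - xh t) \<le> M * exp (- \<alpha> * t))"
      by (rule conclusion)
  qed
qed


end
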